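(* Let $(S,T_S)$ be a scaled simplicial set and let $p:X\to S$ be a $(0,1)$-fibration. Then for every vertex $s\in S$ the fibre $X_s$ is an $\infty$-category (i.e. every triangle of the $\infty$-bicategory $X_s$ is thin) if and only if every triangle of $X$ is lean.
   Context: MB simplicial sets $(X,E_X,T_X\subseteq C_X)$: simplicial set with marked edges and thin $\subseteq$ lean 2-simplices (containing degenerate ones); $\flat$ = degenerate only, $\sharp$ = all, $(X,E,T)$: thin = lean = $T$. Generating MB-anodyne maps: (A1) $(\Lambda^n_i,\flat,\flat\subseteq\{\Delta^{\{i-1,i,i+1\}}\})\to(\Delta^n,\flat,\flat\subseteq\{\Delta^{\{i-1,i,i+1\}}\})$, $n\ge2$, $0<i<n$; (A2) $(\Delta^4,\flat,\flat\subseteq T)\to(\Delta^4,\flat,\flat\subseteq T\cup\{\Delta^{\{0,3,4\}},\Delta^{\{0,1,4\}}\})$, $T=\{\Delta^{\{0,2,4\}},\Delta^{\{1,2,3\}},\Delta^{\{0,1,3\}},\Delta^{\{1,3,4\}},\Delta^{\{0,1,2\}}\}$; (A3) $(\Lambda^n_0,\{\Delta^{\{0,1\}}\},\{\Delta^{\{0,1,n\}}\})\to(\Delta^n,\{\Delta^{\{0,1\}}\},\{\Delta^{\{0,1,n\}}\})$, $n\ge2$; (A4) $(\Delta^0,\sharp,\sharp)\to(\Delta^1,\sharp,\sharp)$; (S1) $(\Delta^2,\{\Delta^{\{0,1\}},\Delta^{\{1,2\}}\},\sharp)\to(\Delta^2,\sharp,\sharp)$; (S2) $(\Delta^2,\flat,\flat\subseteq\sharp)\to(\Delta^2,\flat,\sharp)$;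 (E) $(K,\flat,\sharp)\to(K,\sharp,\sharp)$, $K$ Kan. MB-fibration: right lifting property against their weakly saturated closure. A $(0,1)$-fibration over $(S,T_S)$ is an MB-fibration $p:X\to(S,\sharp,T_S\subseteq\sharp)$. The fibre $X_s$ is the pullback along $s:\Delta^0\to S$; in it lean and thin triangles coincide and it is an $\infty$-bicategory (fibrant scaled simplicial set) with these thin triangles. *)

theory Defs
  imports Main
begin

text \<open>A simplicial set: sets of n-simplices together with the action of monotone maps
  theta : [m] -> [n] of the simplex category, act X theta m n : X_n -> X_m.\<close>

record 'a sset =
  simp :: "nat \<Rightarrow> 'a set"
  act  :: "(nat \<Rightarrow> nat) \<Rightarrow> nat \<Rightarrow> nat \<Rightarrow> 'a \<Rightarrow> 'a"

definition mono_map :: "(nat \<Rightarrow> nat) \<Rightarrow> nat \<Rightarrow> nat \<Rightarrow> bool" where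
  "mono_map \<theta> m n \<longleftrightarrow> (\<forall>i\<le>m. \<theta> i \<le> n) \<and> (\<forall>i j. i \<le> j \<and> j \<le> m \<longrightarrow> \<theta> i \<le> \<theta> j)"

definition is_sset :: "('a, 'z) sset_scheme \<Rightarrow> bool" where
  "is_sset X \<longleftrightarrow>
     (\<forall>\<theta> m n x. mono_map \<theta> m n \<and> x \<in> simp X n \<longrightarrow> act X \<theta> m n x \<in> simp X m)
   \<and> (\<forall>n x. x \<in> simp X n \<longrightarrow> act X id n n x = x)
   \<and> (\<forall>\<theta> \<psi> k m n x. mono_map \<theta> m n \<and> mono_map \<psi> k m \<and> x \<in> simp X n \<longrightarrow>
          act X (\<theta> \<circ> \<psi>) k n x = act X \<psi> k m (act X \<theta> m n x))
   \<and> (\<forall>\<theta> \<theta>' m n x. (\<forall>i\<le>m. \<theta> i = \<theta>' i) \<and> x \<in> simp X n \<longrightarrow>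
          act X \<theta> m n x = act X \<theta>' m n x)"

definition is_smap :: "('a, 'z) sset_scheme \<Rightarrow> ('b, 'w) sset_scheme \<Rightarrow> (nat \<Rightarrow> 'a \<Rightarrow> 'b) \<Rightarrow> bool" where
  "is_smap X Y f \<longleftrightarrow>
     (\<forall>n x. x \<in> simp X n \<longrightarrow> f n x \<in> simp Y n)
   \<and> (\<forall>\<theta> m n x. mono_map \<theta> m n \<and> x \<in> simp X n \<longrightarrow> f m (act X \<theta> m n x) = act Y \<theta> m n (f n x))"

definition sdeg :: "nat \<Rightarrow> nat \<Rightarrow> nat" where
  "sdeg j i = (if i \<le> j then i else i - 1)"

definition degenerate :: "('a, 'z) sset_scheme \<Rightarrow> nat \<Rightarrow> 'a \<Rightarrow> bool" where
  "degenerate X n x \<longleftrightarrow> 0 < n \<and> (\<exists>j<n. \<exists>y\<in>simp X (n - 1). x = act X (sdeg j) n (n - 1) y)"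

record 'a mbset = "'a sset" +
  marked :: "'a set"
  lean   :: "'a set"
  thin   :: "'a set"

definition is_mbset :: "'a mbset \<Rightarrow> bool" where
  "is_mbset X \<longleftrightarrow> is_sset X
     \<and> marked X \<subseteq> simp X 1 \<and> thin X \<subseteq> lean X \<and> lean X \<subseteq> simp X 2
     \<and> {x \<in> simp X 1. degenerate X 1 x} \<subseteq> marked X
     \<and> {x \<in> simp X 2. degenerate X 2 x} \<subseteq> thin X"

definition is_mbmap :: "'a mbset \<Rightarrow> 'b mbset \<Rightarrow> (nat \<Rightarrow> 'a \<Rightarrow> 'b) \<Rightarrow> bool" where
  "is_mbmap X Y f \<longleftrightarrow> is_smap X Y f
     \<and> f 1 ` marked X \<subseteq> marked Y \<and> f 2 ` lean X \<subseteq> lean Y \<and> f 2 ` thin X \<subseteq> thin Y"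

text \<open>m-simplices of Delta^n are nondecreasing lists of length m+1 with entries in {0..n};
  a (downward closed) predicate P on the vertex set cuts out a simplicial subset.\<close>

definition std_simps :: "(nat set \<Rightarrow> bool) \<Rightarrow> nat \<Rightarrow> nat \<Rightarrow> nat list set" where
  "std_simps P n m = {xs. length xs = Suc m \<and> sorted xs \<and> set xs \<subseteq> {..n} \<and> P (set xs)}"

definition mkstd :: "(nat set \<Rightarrow> bool) \<Rightarrow> nat \<Rightarrow> nat list set \<Rightarrow> nat list set \<Rightarrow> nat list set
                     \<Rightarrow> nat list mbset" where
  "mkstd P n E L T =
    \<lparr> simp = std_simps P n,
      act = (\<lambda>\<theta> m k xs. map (\<lambda>i. xs ! \<theta> i) [0..<Suc m]),
      marked = {xs \<in> std_simps P n 1. \<not> distinct xs \<or> xs \<in> E},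
      lean = {xs \<in> std_simps P n 2. \<not> distinct xs \<or> xs \<in> L},
      thin = {xs \<in> std_simps P n 2. \<not> distinct xs \<or> xs \<in> T} \<rparr>"

definition fullP :: "nat set \<Rightarrow> bool" where "fullP F = True"

definition hornP :: "nat \<Rightarrow> nat \<Rightarrow> nat set \<Rightarrow> bool" where
  "hornP n i F \<longleftrightarrow> \<not> ({..n} - {i} \<subseteq> F)"

definition vert0P :: "nat set \<Rightarrow> bool" where "vert0P F \<longleftrightarrow> F \<subseteq> {0}"

definition kan :: "'a sset \<Rightarrow> bool" where
  "kan K \<longleftrightarrow> is_sset K \<and>
    (\<forall>n k f. 1 \<le> n \<and> k \<le> n \<and> is_smap (mkstd (hornP n k) n {} {} {}) K f \<longrightarrow>
       (\<exists>g. is_smap (mkstd fullP n {} {} {}) K g \<and>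
            (\<forall>m x. x \<in> simp (mkstd (hornP n k) n {} {} {}) m \<longrightarrow> g m x = f m x)))"

definition flat_sharp :: "'a sset \<Rightarrow> 'a mbset" where
  "flat_sharp K = \<lparr> simp = simp K, act = act K, marked = {x \<in> simp K 1. degenerate K 1 x},
                    lean = simp K 2, thin = simp K 2 \<rparr>"

definition sharp_sharp :: "'a sset \<Rightarrow> 'a mbset" where
  "sharp_sharp K = \<lparr> simp = simp K, act = act K, marked = simp K 1,
                     lean = simp K 2, thin = simp K 2 \<rparr>"

text \<open>Right lifting property of p : X -> Y against the MB map A -> B whose underlying map
  is the identity/inclusion (simp A n is a subset of simp B n, same action).\<close>
definition rlp :: "'c mbset \<Rightarrow> 'c mbset \<Rightarrow> 'a mbset \<Rightarrow> 'b mbset \<Rightarrow> (nat \<Rightarrow> 'a \<Rightarrow> 'b) \<Rightarrow> bool" where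
  "rlp A B X Y p \<longleftrightarrow>
    (\<forall>u v. is_mbmap A X u \<and> is_mbmap B Y v \<and> (\<forall>n x. x \<in> simp A n \<longrightarrow> p n (u n x) = v n x) \<longrightarrow>
       (\<exists>h. is_mbmap B X h \<and> (\<forall>n x. x \<in> simp A n \<longrightarrow> h n x = u n x)
            \<and> (\<forall>n x. x \<in> simp B n \<longrightarrow> p n (h n x) = v n x)))"

definition A2T :: "nat list set" where
  "A2T = {[0,2,4], [1,2,3], [0,1,3], [1,3,4], [0,1,2]}"

definition mb_fibration :: "'a mbset \<Rightarrow> 'b mbset \<Rightarrow> (nat \<Rightarrow> 'a \<Rightarrow> 'b) \<Rightarrow> bool" where
  "mb_fibration X Y p \<longleftrightarrow> is_mbset X \<and> is_mbset Y \<and> is_mbmap X Y p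
   \<and> (\<forall>n i. 2 \<le> n \<and> 0 < i \<and> i < n \<longrightarrow>
        rlp (mkstd (hornP n i) n {} {[i - 1, i, i + 1]} {})
            (mkstd fullP n {} {[i - 1, i, i + 1]} {}) X Y p)
   \<and> rlp (mkstd fullP 4 {} A2T {}) (mkstd fullP 4 {} (A2T \<union> {[0,3,4], [0,1,4]}) {}) X Y p
   \<and> (\<forall>n. 2 \<le> n \<longrightarrow>
        rlp (mkstd (hornP n 0) n {[0,1]} {[0,1,n]} {[0,1,n]})
            (mkstd fullP n {[0,1]} {[0,1,n]} {[0,1,n]}) X Y p)
   \<and> rlp (mkstd vert0P 1 UNIV UNIV UNIV) (mkstd fullP 1 UNIV UNIV UNIV) X Y p
   \<and> rlp (mkstd fullP 2 {[0,1], [1,2]} UNIV UNIV) (mkstd fullP 2 UNIV UNIV UNIV) X Y p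
   \<and> rlp (mkstd fullP 2 {} UNIV {}) (mkstd fullP 2 {} UNIV UNIV) X Y p
   \<and> (\<forall>K :: nat sset. kan K \<longrightarrow> rlp (flat_sharp K) (sharp_sharp K) X Y p)"

definition is_scaled :: "'b sset \<Rightarrow> 'b set \<Rightarrow> bool" where
  "is_scaled S TS \<longleftrightarrow> is_sset S \<and> TS \<subseteq> simp S 2 \<and> {x \<in> simp S 2. degenerate S 2 x} \<subseteq> TS"

definition sharp_scaled :: "'b sset \<Rightarrow> 'b set \<Rightarrow> 'b mbset" where
  "sharp_scaled S TS = \<lparr> simp = simp S, act = act S, marked = simp S 1, lean = simp S 2, thin = TS \<rparr>"

definition zero_one_fibration :: "'b sset \<Rightarrow> 'b set \<Rightarrow> 'a mbset \<Rightarrow> (nat \<Rightarrow> 'a \<Rightarrow> 'b) \<Rightarrow> bool" where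
  "zero_one_fibration S TS X p \<longleftrightarrow> is_scaled S TS \<and> mb_fibration X (sharp_scaled S TS) p"

text \<open>The fibre X_s: pullback of p along s : Delta^0 -> S, realised as the simplices of X
  lying over the totally degenerate simplices on s, with the induced MB structure.\<close>
definition fibre :: "'b sset \<Rightarrow> 'a mbset \<Rightarrow> (nat \<Rightarrow> 'a \<Rightarrow> 'b) \<Rightarrow> 'b \<Rightarrow> 'a mbset" where
  "fibre S X p s =
    (let F = (\<lambda>n. {x \<in> simp X n. p n x = act S (\<lambda>_. 0) n 0 s}) in
     \<lparr> simp = F, act = act X, marked = marked X \<inter> F 1, lean = lean X \<inter> F 2,
       thin = thin X \<inter> F 2 \<rparr>)"

definition all_triangles_thin :: "'a mbset \<Rightarrow> bool" where
  "all_triangles_thin Y \<longleftrightarrow> simp Y 2 \<subseteq> thin Y"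

definition all_triangles_lean :: "'a mbset \<Rightarrow> bool" where
  "all_triangles_lean Y \<longleftrightarrow> simp Y 2 \<subseteq> lean Y"

end

theory Submission
  imports Defs
begin

definition vl :: "nat list \<Rightarrow> nat \<Rightarrow> nat \<Rightarrow> bool" where
  "vl F m k \<longleftrightarrow> length F = Suc m \<and> sorted F \<and> set F \<subseteq> {..k}"

definition fc :: "('a,'z) sset_scheme \<Rightarrow> nat \<Rightarrow> nat \<Rightarrow> nat list \<Rightarrow> 'a \<Rightarrow> 'a" where
  "fc X m k F z = act X (\<lambda>i. F ! i) m k z"

lemma std_simps_vl: "xs \<in> std_simps P n m \<longleftrightarrow> vl xs m n \<and> P (set xs)"
  by (auto simp: std_simps_def vl_def)

lemma mkstd_simps[simp]:
  "simp (mkstd P n E L T) = std_simps P n"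
  "act (mkstd P n E L T) = (\<lambda>\<theta> m k xs. map (\<lambda>i. xs ! \<theta> i) [0..<Suc m])"
  "marked (mkstd P n E L T) = {xs \<in> std_simps P n 1. \<not> distinct xs \<or> xs \<in> E}"
  "lean (mkstd P n E L T) = {xs \<in> std_simps P n 2. \<not> distinct xs \<or> xs \<in> L}"
  "thin (mkstd P n E L T) = {xs \<in> std_simps P n 2. \<not> distinct xs \<or> xs \<in> T}"
  by (simp_all add: mkstd_def)

lemma mono_vl: "vl F m k \<Longrightarrow> mono_map (\<lambda>i. F ! i) m k"
  unfolding vl_def mono_map_def
  by (auto simp: sorted_nth_mono) (metis atMost_iff le_imp_less_Suc nth_mem subsetD)

lemma sset_act_in: assumes "is_sset X" "mono_map \<theta> m n" "x \<in> simp X n" shows "act X \<theta> m n x \<in> simp X m"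
proof -
  have "\<forall>\<theta> m n x. mono_map \<theta> m n \<and> x \<in> simp X n \<longrightarrow> act X \<theta> m n x \<in> simp X m"
    using assms(1) unfolding is_sset_def by (rule conjunct1)
  then show ?thesis using assms(2,3) by blast
qed
lemma sset_id: assumes "is_sset X" "x \<in> simp X n" shows "act X id n n x = x"
proof -
  have "\<forall>n x. x \<in> simp X n \<longrightarrow> act X id n n x = x"
    using assms(1) unfolding is_sset_def by (elim conjE)
  then show ?thesis using assms(2) by blast
qed
lemma sset_comp: assumes "is_sset X" "mono_map \<theta> m n" "mono_map \<psi> k m" "x \<in> simp X n" shows
   "act X (\<theta> \<circ> \<psi>) k n x = act X \<psi> k m (act X \<theta> m n x)"
proof -
  have "\<forall>\<theta> \<psi> k m n x. mono_map \<theta> m n \<and> mono_map \<psi> k m \<and> x \<in> simp X n \<longrightarrow>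
          act X (\<theta> \<circ> \<psi>) k n x = act X \<psi> k m (act X \<theta> m n x)"
    using assms(1) unfolding is_sset_def by (elim conjE)
  then show ?thesis using assms(2-4) by blast
qed
lemma sset_ext: assumes "is_sset X" "\<And>i. i \<le> m \<Longrightarrow> \<theta> i = \<theta>' i" "x \<in> simp X n" shows
   "act X \<theta> m n x = act X \<theta>' m n x"
proof -
  have "\<forall>\<theta> \<theta>' m n x. (\<forall>i\<le>m. \<theta> i = \<theta>' i) \<and> x \<in> simp X n \<longrightarrow>
          act X \<theta> m n x = act X \<theta>' m n x"
    using assms(1) unfolding is_sset_def by (elim conjE)
  then show ?thesis using assms(2,3) by blast
qed

lemma fc_in: "is_sset X \<Longrightarrow> z \<in> simp X k \<Longrightarrow> vl F m k \<Longrightarrow> fc X m k F z \<in> simp X m"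
  unfolding fc_def by (rule sset_act_in[OF _ mono_vl])

lemma vl_map: assumes "vl G k l" "vl F m k" shows "vl (map ((!) G) F) m l"
proof -
  have g: "length G = Suc k" "sorted G" "set G \<subseteq> {..l}" and f: "length F = Suc m" "sorted F" "set F \<subseteq> {..k}"
    using assms by (auto simp: vl_def)
  have lt: "\<And>x. x \<in> set F \<Longrightarrow> x < length G" using f g by auto
  have s: "sorted (map ((!) G) F)" unfolding sorted_iff_nth_mono
  proof (intro allI impI)
    fix i j assume a0: "i \<le> j" "j < length (map ((!) G) F)"
    then have a: "i \<le> j \<and> j < length (map ((!) G) F)" by simp
    then have "F ! i \<le> F ! j" "F ! j < length G" using f(2) lt by (auto simp: sorted_nth_mono)
    then show "map ((!) G) F ! i \<le> map ((!) G) F ! j" using a g(2) sorted_nth_mono[of G "F!i" "F!j"] by simp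
  qed
  have "set (map ((!) G) F) \<subseteq> set G" using lt by auto
  then show ?thesis using s f g unfolding vl_def by auto
qed

lemma fc_fc: "is_sset X \<Longrightarrow> z \<in> simp X l \<Longrightarrow> vl G k l \<Longrightarrow> vl F m k \<Longrightarrow>
   fc X m k F (fc X k l G z) = fc X m l (map ((!) G) F) z"
  unfolding fc_def
proof -
  assume a: "is_sset X" "z \<in> simp X l" "vl G k l" "vl F m k"
  have "act X (\<lambda>i. F ! i) m k (act X ((!) G) k l z) = act X ((\<lambda>i. G ! i) \<circ> (\<lambda>i. F ! i)) m l z"
    using sset_comp[OF a(1) mono_vl[OF a(3)] mono_vl[OF a(4)] a(2)] by simp
  also have "\<dots> = act X (\<lambda>i. map ((!) G) F ! i) m l z"
    apply (rule sset_ext[OF a(1) _ a(2)])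
    using a(4) by (auto simp: vl_def)
  finally show "act X (\<lambda>i. F ! i) m k (act X ((!) G) k l z) = act X (\<lambda>i. map ((!) G) F ! i) m l z" .
qed

lemma fc_id: "is_sset X \<Longrightarrow> z \<in> simp X k \<Longrightarrow> fc X k k [0..<Suc k] z = z"
  unfolding fc_def
  apply (subst sset_ext[where \<theta>'=id])
  by (auto simp: nth_upt sset_id simp del: upt_Suc)

lemma smap_in: assumes "is_smap X Y f" "x \<in> simp X n" shows "f n x \<in> simp Y n"
proof -
  have "\<forall>n x. x \<in> simp X n \<longrightarrow> f n x \<in> simp Y n"
    using assms(1) unfolding is_smap_def by (rule conjunct1)
  then show ?thesis using assms(2) by blast
qed
lemma smap_act: assumes "is_smap X Y f" "mono_map \<theta> m n" "x \<in> simp X n"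
  shows "f m (act X \<theta> m n x) = act Y \<theta> m n (f n x)"
proof -
  have "\<forall>\<theta> m n x. mono_map \<theta> m n \<and> x \<in> simp X n \<longrightarrow> f m (act X \<theta> m n x) = act Y \<theta> m n (f n x)"
    using assms(1) unfolding is_smap_def by (elim conjE)
  then show ?thesis using assms(2,3) by blast
qed

lemma smap_fc: "is_smap X Y p \<Longrightarrow> z \<in> simp X k \<Longrightarrow> vl F m k \<Longrightarrow>
   p m (fc X m k F z) = fc Y m k F (p k z)"
  unfolding fc_def by (rule smap_act[OF _ mono_vl])

lemma smap_yon: "is_sset X \<Longrightarrow> z \<in> simp X k \<Longrightarrow> is_smap (mkstd P k E L T) X (\<lambda>m xs. fc X m k xs z)"
  unfolding is_smap_def
proof (intro conjI allI impI)
  fix n xs assume "is_sset X" "z \<in> simp X k" "xs \<in> simp (mkstd P k E L T) n"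
  then show "fc X n k xs z \<in> simp X n" by (auto simp: std_simps_vl fc_in)
next
  fix \<theta> m n x assume a: "is_sset X" "z \<in> simp X k" "mono_map \<theta> m n \<and> x \<in> simp (mkstd P k E L T) n"
  then have v: "vl x n k" and mo: "mono_map \<theta> m n" by (auto simp: std_simps_vl)
  have "act X \<theta> m n (fc X n k x z) = act X ((\<lambda>i. x ! i) \<circ> \<theta>) m k z"
    unfolding fc_def using sset_comp[OF a(1) mono_vl[OF v] mo a(2)] by simp
  also have "\<dots> = fc X m k (act (mkstd P k E L T) \<theta> m n x) z"
    unfolding fc_def apply (rule sset_ext[OF a(1) _ a(2)]) by (auto simp del: upt_Suc)
  finally show "fc X m k (act (mkstd P k E L T) \<theta> m n x) z = act X \<theta> m n (fc X n k x z)" by (rule sym)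
qed


lemma sorted_nondistinct:
  assumes "sorted xs" "\<not> distinct xs"
  shows "\<exists>j. Suc j < length xs \<and> xs ! j = xs ! Suc j"
proof (rule ccontr)
  assume "\<not> ?thesis"
  then have "\<forall>j. Suc j < length xs \<longrightarrow> xs ! j < xs ! Suc j"
    using assms(1) by (metis Suc_lessD le_less lessI sorted_nth_mono)
  then have "sorted_wrt (<) xs"
    by (simp add: sorted_wrt_iff_nth_Suc_transp[OF transp_on_less])
  then show False using assms(2) by (simp add: strict_sorted_iff)
qed

lemma mono_sdeg: "j < m \<Longrightarrow> mono_map (sdeg j) m (m - 1)"
  unfolding mono_map_def sdeg_def by auto

lemma smap_degenerate:
  assumes u: "is_smap (mkstd P n E L T) X u" and xs: "xs \<in> std_simps P n m" and nd: "\<not> distinct xs"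
  shows "degenerate X m (u m xs)"
proof -
  have v: "length xs = Suc m" "sorted xs" "set xs \<subseteq> {..n}" "P (set xs)"
    using xs by (auto simp: std_simps_def)
  obtain j where j: "Suc j < length xs" "xs ! j = xs ! Suc j"
    using sorted_nondistinct[OF v(2) nd] by blast
  have jm: "j < m" using j v by simp
  define ys where "ys = take j xs @ drop (Suc j) xs"
  have lys: "length ys = m" using j v by (simp add: ys_def)
  have nth: "\<And>k. k < m \<Longrightarrow> ys ! k = xs ! (if k < j then k else Suc k)"
    using j v by (auto simp: ys_def nth_append min_def)
  have dec: "xs = take j xs @ xs ! j # drop (Suc j) xs"
    using id_take_nth_drop[OF Suc_lessD[OF j(1)]] .
  have "xs ! Suc j \<in> set (drop (Suc j) xs)"
    using j by (metis Cons_nth_drop_Suc list.set_intros(1))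
  then have sys: "set ys = set xs"
    using dec j(2) unfolding ys_def by (metis Un_insert_right insert_absorb list.set(2) set_append)
  have sorted_ys: "sorted ys" unfolding sorted_iff_nth_mono
  proof (intro allI impI)
    fix a b assume ab: "a \<le> b" "b < length ys"
    show "ys ! a \<le> ys ! b"
      using ab lys nth[of a] nth[of b] v(1,2)
      by (auto intro!: sorted_nth_mono)
  qed
  have ys: "ys \<in> std_simps P n (m - 1)"
    using lys jm sys v sorted_ys by (auto simp: std_simps_def)
  have eq: "xs = act (mkstd P n E L T) (sdeg j) m (m - 1) ys"
    apply (simp del: upt_Suc)
    apply (rule nth_equalityI)
    using v(1) nth j(2) jm by (auto simp: sdeg_def simp del: upt_Suc)
  have "u m xs = act X (sdeg j) m (m - 1) (u (m - 1) ys)"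
    apply (subst eq) apply (rule smap_act[OF u mono_sdeg[OF jm]]) using ys by simp
  moreover have "u (m - 1) ys \<in> simp X (m - 1)" using smap_in[OF u] ys by simp
  ultimately show ?thesis unfolding degenerate_def using jm by auto
qed

lemma fc_degenerate:
  assumes "is_sset X" "z \<in> simp X k" "vl F m k" "\<not> distinct F"
  shows "degenerate X m (fc X m k F z)"
  using smap_degenerate[OF smap_yon[OF assms(1,2), of fullP "{}" "{}" "{}"], of F m] assms(3,4)
  by (simp add: std_simps_vl fullP_def)

lemma mbset_sset: "is_mbset X \<Longrightarrow> is_sset X" by (simp add: is_mbset_def)
lemma mbset_deg1: "is_mbset X \<Longrightarrow> x \<in> simp X 1 \<Longrightarrow> degenerate X 1 x \<Longrightarrow> x \<in> marked X"
  unfolding is_mbset_def by auto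
lemma mbset_deg2: "is_mbset X \<Longrightarrow> x \<in> simp X 2 \<Longrightarrow> degenerate X 2 x \<Longrightarrow> x \<in> thin X"
  unfolding is_mbset_def by auto
lemma mbset_thin_lean: "is_mbset X \<Longrightarrow> x \<in> thin X \<Longrightarrow> x \<in> lean X"
  unfolding is_mbset_def by auto

lemma mbmap_mkstd:
  assumes X: "is_mbset X" and u: "is_smap (mkstd P n E L T) X u"
  and mk: "\<forall>xs\<in>std_simps P n 1. distinct xs \<and> xs \<in> E \<longrightarrow> u 1 xs \<in> marked X"
  and ln: "\<forall>xs\<in>std_simps P n 2. distinct xs \<and> xs \<in> L \<longrightarrow> u 2 xs \<in> lean X"
  and th: "\<forall>xs\<in>std_simps P n 2. distinct xs \<and> xs \<in> T \<longrightarrow> u 2 xs \<in> thin X"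
  shows "is_mbmap (mkstd P n E L T) X u"
  unfolding is_mbmap_def
proof (intro conjI u subsetI)
  fix a assume "a \<in> u 1 ` marked (mkstd P n E L T)"
  then obtain xs where xs: "xs \<in> std_simps P n 1" "\<not> distinct xs \<or> xs \<in> E" "a = u 1 xs" by auto
  show "a \<in> marked X"
  proof (cases "distinct xs")
    case True then show ?thesis using mk xs by auto
  next
    case False then show ?thesis using mbset_deg1[OF X smap_in[OF u] smap_degenerate[OF u]] xs by auto
  qed
next
  fix a assume "a \<in> u 2 ` lean (mkstd P n E L T)"
  then obtain xs where xs: "xs \<in> std_simps P n 2" "\<not> distinct xs \<or> xs \<in> L" "a = u 2 xs" by auto
  show "a \<in> lean X"
  proof (cases "distinct xs")
    case True then show ?thesis using ln xs by auto
  next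
    case False then show ?thesis
      using mbset_thin_lean[OF X mbset_deg2[OF X smap_in[OF u] smap_degenerate[OF u]]] xs by auto
  qed
next
  fix a assume "a \<in> u 2 ` thin (mkstd P n E L T)"
  then obtain xs where xs: "xs \<in> std_simps P n 2" "\<not> distinct xs \<or> xs \<in> T" "a = u 2 xs" by auto
  show "a \<in> thin X"
  proof (cases "distinct xs")
    case True then show ?thesis using th xs by auto
  next
    case False then show ?thesis using mbset_deg2[OF X smap_in[OF u] smap_degenerate[OF u]] xs by auto
  qed
qed


definition idx :: "nat list \<Rightarrow> nat \<Rightarrow> nat" where
  "idx G v = length (filter (\<lambda>j. j < v) G)"

definition dimF :: "nat list \<Rightarrow> nat" where "dimF G = length G - 1"

lemma dimF_simps[simp]: "dimF [a] = 0" "dimF [a,b] = 1" "dimF [a,b,c] = 2" "dimF [a,b,c,d] = 3" "dimF [a,b,c,d,e] = 4"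
  by (simp_all add: dimF_def)

definition fac :: "('a,'z) sset_scheme \<Rightarrow> nat list \<Rightarrow> 'a \<Rightarrow> nat \<Rightarrow> nat list \<Rightarrow> 'a" where
  "fac X G y m xs = fc X m (dimF G) (map (idx G) xs) y"

lemma idx_nth: assumes "sorted_wrt (<) G" "i < length G" shows "idx G (G ! i) = i"
proof -
  have "{k. k < length G \<and> G ! k < G ! i} = {..<i}"
  proof (intro set_eqI iffI)
    fix k assume "k \<in> {k. k < length G \<and> G ! k < G ! i}"
    then have "k < length G" "G ! k < G ! i" by auto
    then show "k \<in> {..<i}" using assms
      by (metis lessThan_iff linorder_neqE_nat order_less_asym sorted_wrt_nth_less)
  next
    fix k assume "k \<in> {..<i}"
    then show "k \<in> {k. k < length G \<and> G ! k < G ! i}" using assms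
      by (auto intro: sorted_wrt_nth_less)
  qed
  then show ?thesis unfolding idx_def length_filter_conv_card by simp
qed

lemma idx_in: assumes "sorted_wrt (<) G" "v \<in> set G" shows "idx G v < length G" "G ! idx G v = v"
proof -
  obtain i where "i < length G" "v = G ! i" using assms(2) by (auto simp: in_set_conv_nth)
  then show "idx G v < length G" "G ! idx G v = v" using idx_nth[OF assms(1)] by auto
qed

lemma idx_mono: assumes "v \<le> w" shows "idx G v \<le> idx G w"
proof -
  have "{i. i < length G \<and> G ! i < v} \<subseteq> {i. i < length G \<and> G ! i < w}" using assms by auto
  then show ?thesis unfolding idx_def length_filter_conv_card by (intro card_mono) auto
qed

lemma vl_G: "sorted_wrt (<) G \<Longrightarrow> G \<noteq> [] \<Longrightarrow> set G \<subseteq> {..n} \<Longrightarrow> vl G (dimF G) n"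
  unfolding vl_def dimF_def by (auto simp: strict_sorted_iff)

lemma vl_idx: assumes "sorted_wrt (<) G" "vl xs m n" "set xs \<subseteq> set G"
  shows "vl (map (idx G) xs) m (dimF G)"
proof -
  have s: "sorted xs" "length xs = Suc m" using assms(2) by (auto simp: vl_def)
  have "sorted (map (idx G) xs)" unfolding sorted_iff_nth_mono
    using s by (auto intro!: idx_mono sorted_nth_mono)
  moreover have "set (map (idx G) xs) \<subseteq> {..dimF G}"
    using idx_in(1)[OF assms(1)] assms(3) by (fastforce simp: dimF_def)
  ultimately show ?thesis using s unfolding vl_def by simp
qed

lemma map_nth_idx: "sorted_wrt (<) G \<Longrightarrow> set xs \<subseteq> set G \<Longrightarrow> map ((!) G) (map (idx G) xs) = xs"
  by (induct xs) (auto simp: idx_in)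

lemma map_idx_self: assumes "sorted_wrt (<) G" shows "map (idx G) G = [0..<length G]"
  by (rule nth_equalityI) (auto simp: idx_nth[OF assms])

lemma fac_in: assumes "is_sset X" "sorted_wrt (<) G" "y \<in> simp X (dimF G)" "vl xs m n" "set xs \<subseteq> set G"
  shows "fac X G y m xs \<in> simp X m"
  unfolding fac_def by (rule fc_in[OF assms(1,3) vl_idx[OF assms(2,4,5)]])

lemma fac_self: assumes "is_sset X" "sorted_wrt (<) G" "G \<noteq> []" "y \<in> simp X (dimF G)"
  shows "fac X G y (dimF G) G = y"
proof -
  have "map (idx G) G = [0..<Suc (dimF G)]" using map_idx_self[OF assms(2)] assms(3) by (simp add: dimF_def)
  then show ?thesis unfolding fac_def using fc_id[OF assms(1,4)] by simp
qed

lemma vl_act: assumes "vl xs m n" "mono_map \<theta> m' m"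
  shows "vl (map (\<lambda>i. xs ! \<theta> i) [0..<Suc m']) m' n" "set (map (\<lambda>i. xs ! \<theta> i) [0..<Suc m']) \<subseteq> set xs"
proof -
  have t: "vl (map \<theta> [0..<Suc m']) m' m"
    using assms(2) unfolding vl_def mono_map_def sorted_iff_nth_mono
    by (auto simp del: upt_Suc)
  have e: "map (\<lambda>i. xs ! \<theta> i) [0..<Suc m'] = map ((!) xs) (map \<theta> [0..<Suc m'])" by simp
  show "vl (map (\<lambda>i. xs ! \<theta> i) [0..<Suc m']) m' n" unfolding e by (rule vl_map[OF assms(1) t])
  have "\<And>i. i < Suc m' \<Longrightarrow> \<theta> i < length xs"
    using assms unfolding vl_def mono_map_def by (simp add: less_Suc_eq_le)
  then show "set (map (\<lambda>i. xs ! \<theta> i) [0..<Suc m']) \<subseteq> set xs"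
    by (auto simp del: upt_Suc)
qed

lemma fac_act: assumes X: "is_sset X" and G: "sorted_wrt (<) G" and y: "y \<in> simp X (dimF G)"
  and xs: "vl xs m n" "set xs \<subseteq> set G" and th: "mono_map \<theta> m' m"
  shows "fac X G y m' (map (\<lambda>i. xs ! \<theta> i) [0..<Suc m']) = act X \<theta> m' m (fac X G y m xs)"
proof -
  have sm: "is_smap (mkstd fullP (dimF G) {} {} {}) X (\<lambda>m xs. fc X m (dimF G) xs y)"
    by (rule smap_yon[OF X y])
  have mx: "map (idx G) xs \<in> simp (mkstd fullP (dimF G) {} {} {}) m"
    using vl_idx[OF G xs] by (simp add: std_simps_vl fullP_def)
  have lt: "\<And>i. i \<le> m' \<Longrightarrow> \<theta> i < length xs" using th xs(1) unfolding mono_map_def vl_def by auto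
  have eq: "map (idx G) (map (\<lambda>i. xs ! \<theta> i) [0..<Suc m']) = map (\<lambda>i. map (idx G) xs ! \<theta> i) [0..<Suc m']"
    using lt by (auto simp del: upt_Suc)
  have "fac X G y m' (map (\<lambda>i. xs ! \<theta> i) [0..<Suc m']) = fc X m' (dimF G) (map (\<lambda>i. map (idx G) xs ! \<theta> i) [0..<Suc m']) y"
    unfolding fac_def eq ..
  also have "\<dots> = act X \<theta> m' m (fc X m (dimF G) (map (idx G) xs) y)"
    using smap_act[OF sm th mx] by simp
  finally show ?thesis unfolding fac_def .
qed

lemma fac_restrict:
  assumes X: "is_sset X" and G: "sorted_wrt (<) G" "set G \<subseteq> {..n}" and C: "sorted_wrt (<) C" "C \<noteq> []" "set C \<subseteq> set G"
  and y: "y \<in> simp X (dimF G)" and xs: "vl xs m n" "set xs \<subseteq> set C"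
  shows "fac X G y m xs = fac X C (fac X G y (dimF C) C) m xs"
proof -
  have vC: "vl C (dimF C) n" using vl_G[OF C(1,2)] C(3) G(2) by auto
  have v1: "vl (map (idx G) C) (dimF C) (dimF G)" by (rule vl_idx[OF G(1) vC C(3)])
  have v2: "vl (map (idx C) xs) m (dimF C)" by (rule vl_idx[OF C(1) xs])
  have "fac X C (fac X G y (dimF C) C) m xs
      = fc X m (dimF G) (map ((!) (map (idx G) C)) (map (idx C) xs)) y"
    unfolding fac_def by (rule fc_fc[OF X y v1 v2])
  also have "map ((!) (map (idx G) C)) (map (idx C) xs) = map (idx G) (map ((!) C) (map (idx C) xs))"
    using idx_in(1)[OF C(1)] xs(2) by auto
  also have "\<dots> = map (idx G) xs" using map_nth_idx[OF C(1) xs(2)] by simp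
  finally show ?thesis unfolding fac_def by simp
qed

lemma p_fac:
  assumes p: "is_smap X Y p" and X: "is_sset X" and Y: "is_sset Y"
  and G: "sorted_wrt (<) G" "G \<noteq> []" "set G \<subseteq> {..n}" and y: "y \<in> simp X (dimF G)"
  and py: "p (dimF G) y = fc Y (dimF G) n G \<beta>" and b: "\<beta> \<in> simp Y n"
  and xs: "vl xs m n" "set xs \<subseteq> set G"
  shows "p m (fac X G y m xs) = fc Y m n xs \<beta>"
proof -
  have v: "vl (map (idx G) xs) m (dimF G)" by (rule vl_idx[OF G(1) xs])
  have "p m (fac X G y m xs) = fc Y m (dimF G) (map (idx G) xs) (fc Y (dimF G) n G \<beta>)"
    unfolding fac_def using smap_fc[OF p y v] py by simp
  also have "\<dots> = fc Y m n (map ((!) G) (map (idx G) xs)) \<beta>"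
    by (rule fc_fc[OF Y b vl_G[OF G] v])
  also have "\<dots> = fc Y m n xs \<beta>" using map_nth_idx[OF G(1) xs(2)] by simp
  finally show ?thesis .
qed


fun glue :: "('a,'z) sset_scheme \<Rightarrow> (nat list \<times> 'a) list \<Rightarrow> nat \<Rightarrow> nat list \<Rightarrow> 'a" where
  "glue X [] m xs = undefined"
| "glue X ((G,y)#FL) m xs = (if set xs \<subseteq> set G then fac X G y m xs else glue X FL m xs)"

definition cmpt :: "('a,'z) sset_scheme \<Rightarrow> nat \<Rightarrow> (nat list \<times> 'a) list \<Rightarrow> bool" where
  "cmpt X n FL \<longleftrightarrow> (\<forall>(G,y)\<in>set FL. \<forall>(H,z)\<in>set FL. \<forall>m xs. vl xs m n \<and> set xs \<subseteq> set G \<and> set xs \<subseteq> set H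
      \<longrightarrow> fac X G y m xs = fac X H z m xs)"

definition wfF :: "('a,'z) sset_scheme \<Rightarrow> nat \<Rightarrow> (nat set \<Rightarrow> bool) \<Rightarrow> (nat list \<times> 'a) list \<Rightarrow> bool" where
  "wfF X n P FL \<longleftrightarrow> (\<forall>(G,y)\<in>set FL. sorted_wrt (<) G \<and> G \<noteq> [] \<and> set G \<subseteq> {..n} \<and> P (set G)
      \<and> y \<in> simp X (dimF G))"

lemma cmptD:
  assumes c: "cmpt X n FL" and G: "(G,y) \<in> set FL" and H: "(H,z) \<in> set FL"
  and xs: "vl xs m n" "set xs \<subseteq> set G" "set xs \<subseteq> set H"
  shows "fac X G y m xs = fac X H z m xs"
proof -
  have "case (G,y) of (G,y) \<Rightarrow> \<forall>(H,z)\<in>set FL. \<forall>m xs. vl xs m n \<and> set xs \<subseteq> set G \<and> set xs \<subseteq> set H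
      \<longrightarrow> fac X G y m xs = fac X H z m xs"
    using c G unfolding cmpt_def by (rule bspec)
  then have "\<forall>(H,z)\<in>set FL. \<forall>m xs. vl xs m n \<and> set xs \<subseteq> set G \<and> set xs \<subseteq> set H
      \<longrightarrow> fac X G y m xs = fac X H z m xs" by simp
  then have "case (H,z) of (H,z) \<Rightarrow> \<forall>m xs. vl xs m n \<and> set xs \<subseteq> set G \<and> set xs \<subseteq> set H
      \<longrightarrow> fac X G y m xs = fac X H z m xs" using H by (rule bspec)
  then show ?thesis using xs by simp
qed

lemma glue_eq: "cmpt X n FL \<Longrightarrow> (G,y) \<in> set FL \<Longrightarrow> vl xs m n \<Longrightarrow> set xs \<subseteq> set G \<Longrightarrow>
   glue X FL m xs = fac X G y m xs"
proof (induct FL)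
  case Nil then show ?case by simp
next
  case (Cons a FL)
  obtain G0 y0 where a: "a = (G0, y0)" by fastforce
  show ?case
  proof (cases "set xs \<subseteq> set G0")
    case True
    then have "glue X (a # FL) m xs = fac X G0 y0 m xs" using a by simp
    also have "\<dots> = fac X G y m xs"
      by (rule cmptD[OF Cons.prems(1) _ Cons.prems(2) Cons.prems(3) True Cons.prems(4)]) (simp add: a)
    finally show ?thesis .
  next
    case False
    then have "(G,y) \<in> set FL" using Cons.prems a by auto
    moreover have "cmpt X n FL" unfolding cmpt_def
      by (intro ballI allI impI, clarify, rule cmptD[OF Cons.prems(1)]) auto
    ultimately show ?thesis using Cons False a by simp
  qed
qed

lemma cmpt_common:
  assumes X: "is_sset X" and wf: "wfF X n P FL"
  and c: "\<forall>(G,y)\<in>set FL. \<forall>(H,z)\<in>set FL. filter (\<lambda>v. v \<in> set H) G \<noteq> [] \<longrightarrow>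
      fac X G y (dimF (filter (\<lambda>v. v \<in> set H) G)) (filter (\<lambda>v. v \<in> set H) G)
    = fac X H z (dimF (filter (\<lambda>v. v \<in> set H) G)) (filter (\<lambda>v. v \<in> set H) G)"
  shows "cmpt X n FL"
  unfolding cmpt_def
proof (intro ballI allI impI, clarify)
  fix G y H z m xs
  assume G: "(G,y) \<in> set FL" and H: "(H,z) \<in> set FL" and xs: "vl xs m n" "set xs \<subseteq> set G" "set xs \<subseteq> set H"
  define C where "C = filter (\<lambda>v. v \<in> set H) G"
  have wG: "sorted_wrt (<) G" "G \<noteq> []" "set G \<subseteq> {..n}" "y \<in> simp X (dimF G)"
    using wf G unfolding wfF_def by auto
  have wH: "sorted_wrt (<) H" "H \<noteq> []" "set H \<subseteq> {..n}" "z \<in> simp X (dimF H)"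
    using wf H unfolding wfF_def by auto
  have sC: "set C = set G \<inter> set H" unfolding C_def by auto
  have xne: "xs \<noteq> []" using xs(1) by (auto simp: vl_def)
  obtain v where "v \<in> set xs" using xne by (cases xs) auto
  then have "v \<in> set C" using sC xs by auto
  then have Cne: "C \<noteq> []" by auto
  have Cs: "sorted_wrt (<) C" unfolding C_def by (rule sorted_wrt_filter[OF wG(1)])
  have xC: "set xs \<subseteq> set C" using sC xs by auto
  have "fac X G y m xs = fac X C (fac X G y (dimF C) C) m xs"
    by (rule fac_restrict[OF X wG(1,3) Cs Cne _ wG(4) xs(1) xC]) (simp add: sC)
  also have "fac X G y (dimF C) C = fac X H z (dimF C) C"
    using c G H Cne unfolding C_def by fastforce
  also have "fac X C (fac X H z (dimF C) C) m xs = fac X H z m xs"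
    by (rule fac_restrict[symmetric, OF X wH(1,3) Cs Cne _ wH(4) xs(1) xC]) (simp add: sC)
  finally show "fac X G y m xs = fac X H z m xs" .
qed

lemma glue_smap:
  assumes X: "is_sset X" and wf: "wfF X n P FL" and cm: "cmpt X n FL"
  and cov: "\<forall>m xs. xs \<in> std_simps P n m \<longrightarrow> (\<exists>(G,y)\<in>set FL. set xs \<subseteq> set G)"
  shows "is_smap (mkstd P n E L T) X (glue X FL)"
  unfolding is_smap_def
proof (intro conjI allI impI)
  fix m xs assume "xs \<in> simp (mkstd P n E L T) m"
  then have xs: "xs \<in> std_simps P n m" by simp
  then obtain G y where G: "(G,y) \<in> set FL" "set xs \<subseteq> set G" using cov by fastforce
  have v: "vl xs m n" using xs by (simp add: std_simps_vl)
  have wG: "sorted_wrt (<) G" "y \<in> simp X (dimF G)" using wf G unfolding wfF_def by auto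
  show "glue X FL m xs \<in> simp X m"
    unfolding glue_eq[OF cm G(1) v G(2)] by (rule fac_in[OF X wG(1) wG(2) v G(2)])
next
  fix \<theta> m' m xs assume a: "mono_map \<theta> m' m \<and> xs \<in> simp (mkstd P n E L T) m"
  then have xs: "xs \<in> std_simps P n m" and th: "mono_map \<theta> m' m" by auto
  then obtain G y where G: "(G,y) \<in> set FL" "set xs \<subseteq> set G" using cov by fastforce
  have v: "vl xs m n" using xs by (simp add: std_simps_vl)
  have wG: "sorted_wrt (<) G" "y \<in> simp X (dimF G)" using wf G unfolding wfF_def by auto
  have v': "vl (map (\<lambda>i. xs ! \<theta> i) [0..<Suc m']) m' n" and s': "set (map (\<lambda>i. xs ! \<theta> i) [0..<Suc m']) \<subseteq> set G"
    using vl_act[OF v th] G(2) by auto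
  have "glue X FL m' (map (\<lambda>i. xs ! \<theta> i) [0..<Suc m']) = fac X G y m' (map (\<lambda>i. xs ! \<theta> i) [0..<Suc m'])"
    by (rule glue_eq[OF cm G(1) v' s'])
  also have "\<dots> = act X \<theta> m' m (fac X G y m xs)" by (rule fac_act[OF X wG(1,2) v G(2) th])
  also have "fac X G y m xs = glue X FL m xs" by (rule glue_eq[symmetric, OF cm G(1) v G(2)])
  finally show "glue X FL m' (act (mkstd P n E L T) \<theta> m' m xs) = act X \<theta> m' m (glue X FL m xs)"
    by simp
qed

lemma rlpD:
  assumes "rlp A B X Y p" "is_mbmap A X u" "is_mbmap B Y v" "\<forall>n x. x \<in> simp A n \<longrightarrow> p n (u n x) = v n x"
  shows "\<exists>h. is_mbmap B X h \<and> (\<forall>n x. x \<in> simp A n \<longrightarrow> h n x = u n x)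
            \<and> (\<forall>n x. x \<in> simp B n \<longrightarrow> p n (h n x) = v n x)"
proof -
  have H: "\<forall>u v. is_mbmap A X u \<and> is_mbmap B Y v \<and> (\<forall>n x. x \<in> simp A n \<longrightarrow> p n (u n x) = v n x) \<longrightarrow>
       (\<exists>h. is_mbmap B X h \<and> (\<forall>n x. x \<in> simp A n \<longrightarrow> h n x = u n x)
            \<and> (\<forall>n x. x \<in> simp B n \<longrightarrow> p n (h n x) = v n x))" using assms(1) unfolding rlp_def .
  show ?thesis by (rule mp[OF spec[OF spec[OF H, of u], of v]]) (intro conjI assms(2-4))
qed

lemma mbmap_smap: "is_mbmap A X h \<Longrightarrow> is_smap A X h" unfolding is_mbmap_def by simp
lemma mbmap_marked: "is_mbmap A X h \<Longrightarrow> x \<in> marked A \<Longrightarrow> h 1 x \<in> marked X" unfolding is_mbmap_def by auto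
lemma mbmap_lean: "is_mbmap A X h \<Longrightarrow> x \<in> lean A \<Longrightarrow> h 2 x \<in> lean X" unfolding is_mbmap_def by auto
lemma mbmap_thin: "is_mbmap A X h \<Longrightarrow> x \<in> thin A \<Longrightarrow> h 2 x \<in> thin X" unfolding is_mbmap_def by auto

lemma upt_std: "[0..<Suc n] \<in> std_simps fullP n n"
  by (auto simp: std_simps_def fullP_def simp del: upt_Suc)

lemma smap_top:
  assumes h: "is_smap (mkstd fullP n E L T) X h" and xs: "vl xs m n"
  shows "h m xs = fc X m n xs (h n [0..<Suc n])"
proof -
  have le: "\<And>i. i \<le> m \<Longrightarrow> xs ! i \<le> n" using xs unfolding vl_def
    by (metis atMost_iff le_imp_less_Suc nth_mem subsetD)
  have "map (\<lambda>i. [0..<Suc n] ! (xs ! i)) [0..<Suc m] = xs"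
    using xs le unfolding vl_def
    by (intro nth_equalityI) (auto simp del: upt_Suc simp: nth_upt less_Suc_eq_le)
  then have "xs = act (mkstd fullP n E L T) (\<lambda>i. xs ! i) m n [0..<Suc n]" by simp
  then have "h m xs = h m (act (mkstd fullP n E L T) (\<lambda>i. xs ! i) m n [0..<Suc n])" by simp
  also have "\<dots> = fc X m n xs (h n [0..<Suc n])"
    unfolding fc_def by (rule smap_act[OF h mono_vl[OF xs]]) (simp only: mkstd_simps upt_std)
  finally show ?thesis .
qed


lemma wfD: "wfF X n P FL \<Longrightarrow> (G,y) \<in> set FL \<Longrightarrow>
   sorted_wrt (<) G \<and> G \<noteq> [] \<and> set G \<subseteq> {..n} \<and> P (set G) \<and> y \<in> simp X (dimF G)"
  unfolding wfF_def by auto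

lemma glue_some:
  assumes cm: "cmpt X n FL" and cov: "\<forall>m xs. xs \<in> std_simps P n m \<longrightarrow> (\<exists>(G,y)\<in>set FL. set xs \<subseteq> set G)"
  and xs: "xs \<in> std_simps P n m"
  obtains G y where "(G,y) \<in> set FL" "set xs \<subseteq> set G" "glue X FL m xs = fac X G y m xs"
proof -
  obtain G y where G: "(G,y) \<in> set FL" "set xs \<subseteq> set G" using cov xs by fastforce
  have v: "vl xs m n" using xs by (simp add: std_simps_vl)
  show ?thesis using that[OF G glue_eq[OF cm G(1) v G(2)]] .
qed

lemma fill:
  assumes rl: "rlp (mkstd P n E L T) (mkstd fullP n E' L' T') X Y p"
  and X: "is_mbset X" and Y: "is_mbset Y" and pm: "is_smap X Y p"
  and b: "\<beta> \<in> simp Y n"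
  and wf: "wfF X n P FL"
  and pf: "\<forall>(G,y)\<in>set FL. p (dimF G) y = fc Y (dimF G) n G \<beta>"
  and cm: "cmpt X n FL"
  and cov: "\<forall>m xs. xs \<in> std_simps P n m \<longrightarrow> (\<exists>(G,y)\<in>set FL. set xs \<subseteq> set G)"
  and mk: "\<forall>(G,y)\<in>set FL. \<forall>xs. xs \<in> std_simps P n 1 \<and> distinct xs \<and> xs \<in> E \<and> set xs \<subseteq> set G \<longrightarrow> fac X G y 1 xs \<in> marked X"
  and ln: "\<forall>(G,y)\<in>set FL. \<forall>xs. xs \<in> std_simps P n 2 \<and> distinct xs \<and> xs \<in> L \<and> set xs \<subseteq> set G \<longrightarrow> fac X G y 2 xs \<in> lean X"
  and th: "\<forall>(G,y)\<in>set FL. \<forall>xs. xs \<in> std_simps P n 2 \<and> distinct xs \<and> xs \<in> T \<and> set xs \<subseteq> set G \<longrightarrow> fac X G y 2 xs \<in> thin X"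
  and vmk: "\<forall>xs\<in>std_simps fullP n 1. distinct xs \<and> xs \<in> E' \<longrightarrow> fc Y 1 n xs \<beta> \<in> marked Y"
  and vln: "\<forall>xs\<in>std_simps fullP n 2. distinct xs \<and> xs \<in> L' \<longrightarrow> fc Y 2 n xs \<beta> \<in> lean Y"
  and vth: "\<forall>xs\<in>std_simps fullP n 2. distinct xs \<and> xs \<in> T' \<longrightarrow> fc Y 2 n xs \<beta> \<in> thin Y"
  shows "\<exists>\<omega>\<in>simp X n. p n \<omega> = \<beta> \<and> (\<forall>(G,y)\<in>set FL. fc X (dimF G) n G \<omega> = y)
     \<and> (\<forall>xs\<in>std_simps fullP n 1. distinct xs \<and> xs \<in> E' \<longrightarrow> fc X 1 n xs \<omega> \<in> marked X)
     \<and> (\<forall>xs\<in>std_simps fullP n 2. distinct xs \<and> xs \<in> L' \<longrightarrow> fc X 2 n xs \<omega> \<in> lean X)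
     \<and> (\<forall>xs\<in>std_simps fullP n 2. distinct xs \<and> xs \<in> T' \<longrightarrow> fc X 2 n xs \<omega> \<in> thin X)"
proof -
  have sX: "is_sset X" by (rule mbset_sset[OF X])
  have sY: "is_sset Y" by (rule mbset_sset[OF Y])
  define u where "u = glue X FL"
  have su: "is_smap (mkstd P n E L T) X u" unfolding u_def by (rule glue_smap[OF sX wf cm cov])
  have mu: "is_mbmap (mkstd P n E L T) X u"
  proof (rule mbmap_mkstd[OF X su])
    show "\<forall>xs\<in>std_simps P n 1. distinct xs \<and> xs \<in> E \<longrightarrow> u 1 xs \<in> marked X"
    proof (intro ballI impI)
      fix xs assume xs: "xs \<in> std_simps P n 1" and d: "distinct xs \<and> xs \<in> E"
      obtain G y where G: "(G,y) \<in> set FL" "set xs \<subseteq> set G" "glue X FL 1 xs = fac X G y 1 xs"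
        by (rule glue_some[OF cm cov xs])
      show "u 1 xs \<in> marked X" using mk G xs d unfolding u_def by fastforce
    qed
    show "\<forall>xs\<in>std_simps P n 2. distinct xs \<and> xs \<in> L \<longrightarrow> u 2 xs \<in> lean X"
    proof (intro ballI impI)
      fix xs assume xs: "xs \<in> std_simps P n 2" and d: "distinct xs \<and> xs \<in> L"
      obtain G y where G: "(G,y) \<in> set FL" "set xs \<subseteq> set G" "glue X FL 2 xs = fac X G y 2 xs"
        by (rule glue_some[OF cm cov xs])
      show "u 2 xs \<in> lean X" using ln G xs d unfolding u_def by fastforce
    qed
    show "\<forall>xs\<in>std_simps P n 2. distinct xs \<and> xs \<in> T \<longrightarrow> u 2 xs \<in> thin X"
    proof (intro ballI impI)
      fix xs assume xs: "xs \<in> std_simps P n 2" and d: "distinct xs \<and> xs \<in> T"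
      obtain G y where G: "(G,y) \<in> set FL" "set xs \<subseteq> set G" "glue X FL 2 xs = fac X G y 2 xs"
        by (rule glue_some[OF cm cov xs])
      show "u 2 xs \<in> thin X" using th G xs d unfolding u_def by fastforce
    qed
  qed
  define v where "v = (\<lambda>m xs. fc Y m n xs \<beta>)"
  have sv: "is_smap (mkstd fullP n E' L' T') Y v" unfolding v_def by (rule smap_yon[OF sY b])
  have mv: "is_mbmap (mkstd fullP n E' L' T') Y v"
    by (rule mbmap_mkstd[OF Y sv]) (use vmk vln vth in \<open>simp_all add: v_def\<close>)
  have cp: "\<forall>m xs. xs \<in> simp (mkstd P n E L T) m \<longrightarrow> p m (u m xs) = v m xs"
  proof (intro allI impI)
    fix m xs assume "xs \<in> simp (mkstd P n E L T) m"
    then have xs: "xs \<in> std_simps P n m" by simp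
    obtain G y where G: "(G,y) \<in> set FL" "set xs \<subseteq> set G" "glue X FL m xs = fac X G y m xs"
      by (rule glue_some[OF cm cov xs])
    have w: "sorted_wrt (<) G" "G \<noteq> []" "set G \<subseteq> {..n}" "y \<in> simp X (dimF G)"
      using wfD[OF wf G(1)] by auto
    have py: "p (dimF G) y = fc Y (dimF G) n G \<beta>" using pf G(1) by fastforce
    have vx: "vl xs m n" using xs by (simp add: std_simps_vl)
    show "p m (u m xs) = v m xs" unfolding u_def v_def G(3)
      by (rule p_fac[OF pm sX sY w(1-3) w(4) py b vx G(2)])
  qed
  obtain h where h: "is_mbmap (mkstd fullP n E' L' T') X h"
    "\<forall>m x. x \<in> simp (mkstd P n E L T) m \<longrightarrow> h m x = u m x"
    "\<forall>m x. x \<in> simp (mkstd fullP n E' L' T') m \<longrightarrow> p m (h m x) = v m x"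
    using rlpD[OF rl mu mv cp] by blast
  have sh: "is_smap (mkstd fullP n E' L' T') X h" by (rule mbmap_smap[OF h(1)])
  define \<omega> where "\<omega> = h n [0..<Suc n]"
  have top: "[0..<Suc n] \<in> simp (mkstd fullP n E' L' T') n" by (simp only: mkstd_simps upt_std)
  have hf: "\<And>m xs. vl xs m n \<Longrightarrow> h m xs = fc X m n xs \<omega>" unfolding \<omega>_def by (rule smap_top[OF sh])
  have "\<omega> \<in> simp X n" unfolding \<omega>_def by (rule smap_in[OF sh top])
  moreover have "p n \<omega> = \<beta>"
  proof -
    have "p n \<omega> = v n [0..<Suc n]" unfolding \<omega>_def using h(3) top by blast
    also have "\<dots> = \<beta>" unfolding v_def by (rule fc_id[OF sY b])
    finally show ?thesis .
  qed
  moreover have "\<forall>(G,y)\<in>set FL. fc X (dimF G) n G \<omega> = y"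
  proof (clarify)
    fix G y assume G: "(G,y) \<in> set FL"
    have w: "sorted_wrt (<) G" "G \<noteq> []" "set G \<subseteq> {..n}" "P (set G)" "y \<in> simp X (dimF G)"
      using wfD[OF wf G] by auto
    have vG: "vl G (dimF G) n" by (rule vl_G[OF w(1-3)])
    have GA: "G \<in> simp (mkstd P n E L T) (dimF G)" using vG w(4) by (simp add: std_simps_vl)
    have "fc X (dimF G) n G \<omega> = h (dimF G) G" using hf[OF vG] by simp
    also have "\<dots> = u (dimF G) G" using h(2) GA by blast
    also have "\<dots> = fac X G y (dimF G) G" unfolding u_def by (rule glue_eq[OF cm G vG order_refl])
    also have "\<dots> = y" by (rule fac_self[OF sX w(1,2,5)])
    finally show "fc X (dimF G) n G \<omega> = y" .
  qed
  moreover have "\<forall>xs\<in>std_simps fullP n 1. distinct xs \<and> xs \<in> E' \<longrightarrow> fc X 1 n xs \<omega> \<in> marked X"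
  proof (intro ballI impI)
    fix xs assume xs: "xs \<in> std_simps fullP n 1" and d: "distinct xs \<and> xs \<in> E'"
    have "xs \<in> marked (mkstd fullP n E' L' T')" using xs d by simp
    then have "h 1 xs \<in> marked X" by (rule mbmap_marked[OF h(1)])
    then show "fc X 1 n xs \<omega> \<in> marked X" using hf xs by (simp add: std_simps_vl)
  qed
  moreover have "\<forall>xs\<in>std_simps fullP n 2. distinct xs \<and> xs \<in> L' \<longrightarrow> fc X 2 n xs \<omega> \<in> lean X"
  proof (intro ballI impI)
    fix xs assume xs: "xs \<in> std_simps fullP n 2" and d: "distinct xs \<and> xs \<in> L'"
    have "xs \<in> lean (mkstd fullP n E' L' T')" using xs d by simp
    then have "h 2 xs \<in> lean X" by (rule mbmap_lean[OF h(1)])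
    then show "fc X 2 n xs \<omega> \<in> lean X" using hf xs by (simp add: std_simps_vl)
  qed
  moreover have "\<forall>xs\<in>std_simps fullP n 2. distinct xs \<and> xs \<in> T' \<longrightarrow> fc X 2 n xs \<omega> \<in> thin X"
  proof (intro ballI impI)
    fix xs assume xs: "xs \<in> std_simps fullP n 2" and d: "distinct xs \<and> xs \<in> T'"
    have "xs \<in> thin (mkstd fullP n E' L' T')" using xs d by simp
    then have "h 2 xs \<in> thin X" by (rule mbmap_thin[OF h(1)])
    then show "fc X 2 n xs \<omega> \<in> thin X" using hf xs by (simp add: std_simps_vl)
  qed
  ultimately show ?thesis by blast
qed


lemma fib_X: "mb_fibration X Y p \<Longrightarrow> is_mbset X" unfolding mb_fibration_def by simp
lemma fib_Y: "mb_fibration X Y p \<Longrightarrow> is_mbset Y" unfolding mb_fibration_def by simp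
lemma fib_p: "mb_fibration X Y p \<Longrightarrow> is_smap X Y p" unfolding mb_fibration_def is_mbmap_def by simp
lemma fib_A1: "mb_fibration X Y p \<Longrightarrow> 2 \<le> n \<Longrightarrow> 0 < i \<Longrightarrow> i < n \<Longrightarrow>
   rlp (mkstd (hornP n i) n {} {[i - 1, i, i + 1]} {}) (mkstd fullP n {} {[i - 1, i, i + 1]} {}) X Y p"
  unfolding mb_fibration_def by simp
lemma fib_A2: "mb_fibration X Y p \<Longrightarrow>
   rlp (mkstd fullP 4 {} A2T {}) (mkstd fullP 4 {} (A2T \<union> {[0,3,4], [0,1,4]}) {}) X Y p"
  unfolding mb_fibration_def by simp
lemma fib_A3: "mb_fibration X Y p \<Longrightarrow> 2 \<le> n \<Longrightarrow>
   rlp (mkstd (hornP n 0) n {[0,1]} {[0,1,n]} {[0,1,n]}) (mkstd fullP n {[0,1]} {[0,1,n]} {[0,1,n]}) X Y p"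
  unfolding mb_fibration_def by simp
lemma fib_A4: "mb_fibration X Y p \<Longrightarrow>
   rlp (mkstd vert0P 1 UNIV UNIV UNIV) (mkstd fullP 1 UNIV UNIV UNIV) X Y p"
  unfolding mb_fibration_def by simp
lemma fib_S2: "mb_fibration X Y p \<Longrightarrow>
   rlp (mkstd fullP 2 {} UNIV {}) (mkstd fullP 2 {} UNIV UNIV) X Y p"
  unfolding mb_fibration_def by simp

lemma upt5: "[0..<Suc 4] = [0,1,2,3,4::nat]" by (simp add: upt_rec)
lemma upt4: "[0..<Suc 3] = [0,1,2,3::nat]" by (simp add: upt_rec)
lemma upt3: "[0..<Suc 2] = [0,1,2::nat]" by (simp add: upt_rec)
lemma upt2: "[0..<Suc 1] = [0,1::nat]" by (simp add: upt_rec)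
lemma upt1: "[0..<Suc 0] = [0::nat]" by (simp add: upt_rec)

lemma fc_id4: "is_sset X \<Longrightarrow> z \<in> simp X 4 \<Longrightarrow> fc X 4 4 [0,1,2,3,4] z = z" using fc_id[of X z 4] by (simp only: upt5)
lemma fc_id3: "is_sset X \<Longrightarrow> z \<in> simp X 3 \<Longrightarrow> fc X 3 3 [0,1,2,3] z = z" using fc_id[of X z 3] by (simp only: upt4)
lemma fc_id2: "is_sset X \<Longrightarrow> z \<in> simp X 2 \<Longrightarrow> fc X 2 2 [0,1,2] z = z" using fc_id[of X z 2] by (simp only: upt3)
lemma fc_id1: "is_sset X \<Longrightarrow> z \<in> simp X 1 \<Longrightarrow> fc X 1 1 [0,1] z = z" using fc_id[of X z 1] by (simp only: upt2)
lemma fc_id0: "is_sset X \<Longrightarrow> z \<in> simp X 0 \<Longrightarrow> fc X 0 0 [0] z = z" using fc_id[of X z 0] by (simp only: upt1)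

lemma atMost4: "{..4::nat} = {0,1,2,3,4}" by auto
lemma atMost3: "{..3::nat} = {0,1,2,3}" by auto
lemma atMost2: "{..2::nat} = {0,1,2}" by auto
lemma atMost1: "{..1::nat} = {0,1}" by auto

lemma sucs[simp]: "Suc (Suc (Suc (Suc 0))) = 4" "Suc (Suc (Suc 0)) = 3" "Suc (Suc 0) = 2" by simp_all

lemma cmpt_single: "is_sset X \<Longrightarrow> wfF X n P [(G,y)] \<Longrightarrow> cmpt X n [(G,y)]"
  by (rule cmpt_common) auto

lemma A2lean:
  assumes fib: "mb_fibration X Y p" and lY: "lean Y = simp Y 2"
  and t: "\<tau> \<in> simp X 4"
  and f: "fc X 2 4 [0,2,4] \<tau> \<in> lean X" "fc X 2 4 [1,2,3] \<tau> \<in> lean X" "fc X 2 4 [0,1,3] \<tau> \<in> lean X"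
         "fc X 2 4 [1,3,4] \<tau> \<in> lean X" "fc X 2 4 [0,1,2] \<tau> \<in> lean X"
  shows "fc X 2 4 [0,3,4] \<tau> \<in> lean X \<and> fc X 2 4 [0,1,4] \<tau> \<in> lean X"
proof -
  have X: "is_mbset X" and Y: "is_mbset Y" and p: "is_smap X Y p"
    using fib_X[OF fib] fib_Y[OF fib] fib_p[OF fib] .
  have sX: "is_sset X" and sY: "is_sset Y" using mbset_sset X Y by auto
  have b: "p 4 \<tau> \<in> simp Y 4" by (rule smap_in[OF p t])
  have wf: "wfF X 4 fullP [([0,1,2,3,4], \<tau>)]" unfolding wfF_def using t by (simp add: fullP_def sucs)
  have "\<exists>\<omega>\<in>simp X 4. p 4 \<omega> = p 4 \<tau> \<and> (\<forall>(G,y)\<in>set [([0,1,2,3,4], \<tau>)]. fc X (dimF G) 4 G \<omega> = y)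
     \<and> (\<forall>xs\<in>std_simps fullP 4 1. distinct xs \<and> xs \<in> {} \<longrightarrow> fc X 1 4 xs \<omega> \<in> marked X)
     \<and> (\<forall>xs\<in>std_simps fullP 4 2. distinct xs \<and> xs \<in> A2T \<union> {[0,3,4], [0,1,4]} \<longrightarrow> fc X 2 4 xs \<omega> \<in> lean X)
     \<and> (\<forall>xs\<in>std_simps fullP 4 2. distinct xs \<and> xs \<in> {} \<longrightarrow> fc X 2 4 xs \<omega> \<in> thin X)"
  proof (rule fill[OF fib_A2[OF fib] X Y p b wf _ cmpt_single[OF sX wf]])
    show "\<forall>(G, y)\<in>set [([0, 1, 2, 3, 4], \<tau>)]. p (dimF G) y = fc Y (dimF G) 4 G (p 4 \<tau>)"
      using fc_id4[OF sY b] by (simp add: sucs)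
    show "\<forall>m xs. xs \<in> std_simps fullP 4 m \<longrightarrow> (\<exists>(G, y)\<in>set [([0, 1, 2, 3, 4], \<tau>)]. set xs \<subseteq> set G)"
      by (auto simp: std_simps_def atMost4)
    show "\<forall>(G, y)\<in>set [([0, 1, 2, 3, 4], \<tau>)]. \<forall>xs. xs \<in> std_simps fullP 4 2 \<and> distinct xs \<and> xs \<in> A2T \<and> set xs \<subseteq> set G \<longrightarrow>
          fac X G y 2 xs \<in> lean X"
      using f by (auto simp: A2T_def fac_def idx_def sucs)
    show "\<forall>xs\<in>std_simps fullP 4 2. distinct xs \<and> xs \<in> A2T \<union> {[0, 3, 4], [0, 1, 4]} \<longrightarrow> fc Y 2 4 xs (p 4 \<tau>) \<in> lean Y"
      using fc_in[OF sY b] by (auto simp: lY std_simps_vl)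
  qed auto
  then obtain \<omega> where w: "\<omega> \<in> simp X 4" "fc X 4 4 [0,1,2,3,4] \<omega> = \<tau>"
    "\<forall>xs\<in>std_simps fullP 4 2. distinct xs \<and> xs \<in> A2T \<union> {[0,3,4], [0,1,4]} \<longrightarrow> fc X 2 4 xs \<omega> \<in> lean X"
    by auto
  have "\<omega> = \<tau>" using w(2) fc_id4[OF sX w(1)] by simp
  then show ?thesis using w(3) by (auto simp: std_simps_def fullP_def)
qed

declare sucs[simp del]


lemma lean_deg: "is_mbset X \<Longrightarrow> z \<in> simp X k \<Longrightarrow> vl F 2 k \<Longrightarrow> \<not> distinct F \<Longrightarrow> fc X 2 k F z \<in> lean X"
  by (meson fc_degenerate fc_in mbset_deg2 mbset_sset mbset_thin_lean)

lemma R1: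
  assumes fib: "mb_fibration X Y p" and lY: "lean Y = simp Y 2" and w: "\<omega> \<in> simp X 3"
  and f: "fc X 2 3 [0,1,2] \<omega> \<in> lean X" "fc X 2 3 [0,1,3] \<omega> \<in> lean X" "fc X 2 3 [1,2,3] \<omega> \<in> lean X"
  shows "fc X 2 3 [0,2,3] \<omega> \<in> lean X"
proof -
  have X: "is_mbset X" by (rule fib_X[OF fib])
  have sX: "is_sset X" by (rule mbset_sset[OF X])
  have v: "vl [0,1,1,2,3] 4 3" by (simp add: vl_def)
  define \<tau> where "\<tau> = fc X 4 3 [0,1,1,2,3] \<omega>"
  have t: "\<tau> \<in> simp X 4" unfolding \<tau>_def by (rule fc_in[OF sX w v])
  have ff: "\<And>F. vl F 2 4 \<Longrightarrow> fc X 2 4 F \<tau> = fc X 2 3 (map ((!) [0,1,1,2,3]) F) \<omega>"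
    unfolding \<tau>_def by (rule fc_fc[OF sX w v])
  have "fc X 2 4 [0,3,4] \<tau> \<in> lean X \<and> fc X 2 4 [0,1,4] \<tau> \<in> lean X"
  proof (rule A2lean[OF fib lY t])
    show "fc X 2 4 [0, 2, 4] \<tau> \<in> lean X" using ff[of "[0,2,4]"] f by (simp add: vl_def)
    show "fc X 2 4 [1, 2, 3] \<tau> \<in> lean X" using ff[of "[1,2,3]"] lean_deg[OF X w, of "[1,1,2]"] by (simp add: vl_def)
    show "fc X 2 4 [0, 1, 3] \<tau> \<in> lean X" using ff[of "[0,1,3]"] f by (simp add: vl_def)
    show "fc X 2 4 [1, 3, 4] \<tau> \<in> lean X" using ff[of "[1,3,4]"] f by (simp add: vl_def)
    show "fc X 2 4 [0, 1, 2] \<tau> \<in> lean X" using ff[of "[0,1,2]"] lean_deg[OF X w, of "[0,1,1]"] by (simp add: vl_def)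
  qed
  then show ?thesis using ff[of "[0,3,4]"] by (simp add: vl_def)
qed

lemma R2:
  assumes fib: "mb_fibration X Y p" and lY: "lean Y = simp Y 2" and w: "\<omega> \<in> simp X 3"
  and f: "fc X 2 3 [0,1,2] \<omega> \<in> lean X" "fc X 2 3 [0,2,3] \<omega> \<in> lean X" "fc X 2 3 [1,2,3] \<omega> \<in> lean X"
  shows "fc X 2 3 [0,1,3] \<omega> \<in> lean X"
proof -
  have X: "is_mbset X" by (rule fib_X[OF fib])
  have sX: "is_sset X" by (rule mbset_sset[OF X])
  have v: "vl [0,1,2,2,3] 4 3" by (simp add: vl_def)
  define \<tau> where "\<tau> = fc X 4 3 [0,1,2,2,3] \<omega>"
  have t: "\<tau> \<in> simp X 4" unfolding \<tau>_def by (rule fc_in[OF sX w v])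
  have ff: "\<And>F. vl F 2 4 \<Longrightarrow> fc X 2 4 F \<tau> = fc X 2 3 (map ((!) [0,1,2,2,3]) F) \<omega>"
    unfolding \<tau>_def by (rule fc_fc[OF sX w v])
  have "fc X 2 4 [0,3,4] \<tau> \<in> lean X \<and> fc X 2 4 [0,1,4] \<tau> \<in> lean X"
  proof (rule A2lean[OF fib lY t])
    show "fc X 2 4 [0, 2, 4] \<tau> \<in> lean X" using ff[of "[0,2,4]"] f by (simp add: vl_def)
    show "fc X 2 4 [1, 2, 3] \<tau> \<in> lean X" using ff[of "[1,2,3]"] lean_deg[OF X w, of "[1,2,2]"] by (simp add: vl_def)
    show "fc X 2 4 [0, 1, 3] \<tau> \<in> lean X" using ff[of "[0,1,3]"] f by (simp add: vl_def)
    show "fc X 2 4 [1, 3, 4] \<tau> \<in> lean X" using ff[of "[1,3,4]"] f by (simp add: vl_def)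
    show "fc X 2 4 [0, 1, 2] \<tau> \<in> lean X" using ff[of "[0,1,2]"] f by (simp add: vl_def)
  qed
  then show ?thesis using ff[of "[0,1,4]"] by (simp add: vl_def)
qed

lemma top_distinct: assumes "xs \<in> std_simps P n n" "distinct xs" shows "xs = [0..<Suc n]"
proof -
  have a: "length xs = Suc n" "sorted xs" "set xs \<subseteq> {..n}" using assms(1) by (auto simp: std_simps_def)
  have "card (set xs) = Suc n" using distinct_card[OF assms(2)] a by simp
  then have "set xs = {..n}" using a(3) by (intro card_subset_eq) auto
  moreover have "set [0..<Suc n] = {..n}" by auto
  ultimately show ?thesis using a assms(2) sorted_upt[of 0 "Suc n"] distinct_upt[of 0 "Suc n"]
    by (intro sorted_distinct_set_unique) (simp_all del: upt_Suc)
qed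

lemma S2thin:
  assumes fib: "mb_fibration X Y p" and mY: "marked Y = simp Y 1" and lY: "lean Y = simp Y 2"
  and x: "x \<in> lean X" and px: "p 2 x \<in> thin Y"
  shows "x \<in> thin X"
proof -
  have X: "is_mbset X" and Y: "is_mbset Y" and p: "is_smap X Y p"
    using fib_X[OF fib] fib_Y[OF fib] fib_p[OF fib] .
  have sX: "is_sset X" and sY: "is_sset Y" using mbset_sset X Y by auto
  have x2: "x \<in> simp X 2" using X x unfolding is_mbset_def by auto
  have b: "p 2 x \<in> simp Y 2" by (rule smap_in[OF p x2])
  have wf: "wfF X 2 fullP [([0,1,2], x)]" unfolding wfF_def using x2 by (simp add: fullP_def)
  have td: "\<And>xs. xs \<in> std_simps fullP 2 2 \<Longrightarrow> distinct xs \<Longrightarrow> xs = [0,1,2]"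
    using top_distinct upt3 by metis
  have "\<exists>\<omega>\<in>simp X 2. p 2 \<omega> = p 2 x \<and> (\<forall>(G,y)\<in>set [([0,1,2], x)]. fc X (dimF G) 2 G \<omega> = y)
     \<and> (\<forall>xs\<in>std_simps fullP 2 1. distinct xs \<and> xs \<in> {} \<longrightarrow> fc X 1 2 xs \<omega> \<in> marked X)
     \<and> (\<forall>xs\<in>std_simps fullP 2 2. distinct xs \<and> xs \<in> UNIV \<longrightarrow> fc X 2 2 xs \<omega> \<in> lean X)
     \<and> (\<forall>xs\<in>std_simps fullP 2 2. distinct xs \<and> xs \<in> UNIV \<longrightarrow> fc X 2 2 xs \<omega> \<in> thin X)"
  proof (rule fill[OF fib_S2[OF fib] X Y p b wf _ cmpt_single[OF sX wf]])
    show "\<forall>(G, y)\<in>set [([0, 1, 2], x)]. p (dimF G) y = fc Y (dimF G) 2 G (p 2 x)"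
      using fc_id2[OF sY b] by simp
    show "\<forall>m xs. xs \<in> std_simps fullP 2 m \<longrightarrow> (\<exists>(G, y)\<in>set [([0, 1, 2], x)]. set xs \<subseteq> set G)"
      by (auto simp: std_simps_def atMost2)
    show "\<forall>(G, y)\<in>set [([0, 1, 2], x)]. \<forall>xs. xs \<in> std_simps fullP 2 2 \<and> distinct xs \<and> xs \<in> UNIV \<and> set xs \<subseteq> set G \<longrightarrow>
          fac X G y 2 xs \<in> lean X"
    proof -
      have "fac X [0,1,2] x 2 [0,1,2] \<in> lean X" using x fc_id2[OF sX x2] by (simp add: fac_def idx_def sucs)
      then show ?thesis using td by fastforce
    qed
    show "\<forall>xs\<in>std_simps fullP 2 1. distinct xs \<and> xs \<in> {} \<longrightarrow> fc Y 1 2 xs (p 2 x) \<in> marked Y" by simp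
    show "\<forall>xs\<in>std_simps fullP 2 2. distinct xs \<and> xs \<in> UNIV \<longrightarrow> fc Y 2 2 xs (p 2 x) \<in> lean Y"
      using fc_in[OF sY b] by (auto simp: lY std_simps_vl)
    show "\<forall>xs\<in>std_simps fullP 2 2. distinct xs \<and> xs \<in> UNIV \<longrightarrow> fc Y 2 2 xs (p 2 x) \<in> thin Y"
      using td px fc_id2[OF sY b] by auto
  qed auto
  then obtain \<omega> where w: "\<omega> \<in> simp X 2" "fc X 2 2 [0,1,2] \<omega> = x"
    "\<forall>xs\<in>std_simps fullP 2 2. distinct xs \<and> xs \<in> UNIV \<longrightarrow> fc X 2 2 xs \<omega> \<in> thin X"
    by auto
  have "\<omega> = x" using w(2) fc_id2[OF sX w(1)] by simp
  moreover have "[0,1,2] \<in> std_simps fullP 2 2" by (simp add: std_simps_def fullP_def)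
  ultimately show ?thesis using w(3) fc_id2[OF sX w(1)] by auto
qed


lemma A4lift:
  assumes fib: "mb_fibration X Y p" and mY: "marked Y = simp Y 1" and lY: "lean Y = simp Y 2"
  and x0: "x0 \<in> simp X 0" and c: "c \<in> simp Y 1" and px: "p 0 x0 = fc Y 0 1 [0] c"
  shows "\<exists>e\<in>simp X 1. e \<in> marked X \<and> p 1 e = c \<and> fc X 0 1 [0] e = x0"
proof -
  have X: "is_mbset X" and Y: "is_mbset Y" and p: "is_smap X Y p"
    using fib_X[OF fib] fib_Y[OF fib] fib_p[OF fib] .
  have sX: "is_sset X" and sY: "is_sset Y" using mbset_sset X Y by auto
  have wf: "wfF X 1 vert0P [([0], x0)]" unfolding wfF_def using x0 by (simp add: vert0P_def)
  have nd: "\<And>xs m. xs \<in> std_simps fullP 1 m \<Longrightarrow> distinct xs \<Longrightarrow> m \<le> 1"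
  proof -
    fix xs m assume "xs \<in> std_simps fullP 1 m" "distinct xs"
    then have "card (set xs) = Suc m" "set xs \<subseteq> {..1}" by (auto simp: std_simps_def distinct_card)
    then show "m \<le> 1" using card_mono[of "{..1::nat}" "set xs"] by simp
  qed
  have nd0: "\<And>xs m. xs \<in> std_simps vert0P 1 m \<Longrightarrow> distinct xs \<Longrightarrow> m = 0"
  proof -
    fix xs m assume "xs \<in> std_simps vert0P 1 m" "distinct xs"
    then have "card (set xs) = Suc m" "set xs \<subseteq> {0}" by (auto simp: std_simps_def distinct_card vert0P_def)
    then show "m = 0" using card_mono[of "{0::nat}" "set xs"] by simp
  qed
  have "\<exists>\<omega>\<in>simp X 1. p 1 \<omega> = c \<and> (\<forall>(G,y)\<in>set [([0], x0)]. fc X (dimF G) 1 G \<omega> = y)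
     \<and> (\<forall>xs\<in>std_simps fullP 1 1. distinct xs \<and> xs \<in> UNIV \<longrightarrow> fc X 1 1 xs \<omega> \<in> marked X)
     \<and> (\<forall>xs\<in>std_simps fullP 1 2. distinct xs \<and> xs \<in> UNIV \<longrightarrow> fc X 2 1 xs \<omega> \<in> lean X)
     \<and> (\<forall>xs\<in>std_simps fullP 1 2. distinct xs \<and> xs \<in> UNIV \<longrightarrow> fc X 2 1 xs \<omega> \<in> thin X)"
  proof (rule fill[OF fib_A4[OF fib] X Y p c wf _ cmpt_single[OF sX wf]])
    show "\<forall>(G, y)\<in>set [([0], x0)]. p (dimF G) y = fc Y (dimF G) 1 G c" using px by simp
    show "\<forall>m xs. xs \<in> std_simps vert0P 1 m \<longrightarrow> (\<exists>(G, y)\<in>set [([0], x0)]. set xs \<subseteq> set G)"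
      by (auto simp: std_simps_def vert0P_def)
    show "\<forall>(G, y)\<in>set [([0], x0)]. \<forall>xs. xs \<in> std_simps vert0P 1 1 \<and> distinct xs \<and> xs \<in> UNIV \<and> set xs \<subseteq> set G \<longrightarrow>
        fac X G y 1 xs \<in> marked X" using nd0 by fastforce
    show "\<forall>(G, y)\<in>set [([0], x0)]. \<forall>xs. xs \<in> std_simps vert0P 1 2 \<and> distinct xs \<and> xs \<in> UNIV \<and> set xs \<subseteq> set G \<longrightarrow>
        fac X G y 2 xs \<in> lean X" using nd0 by fastforce
    show "\<forall>(G, y)\<in>set [([0], x0)]. \<forall>xs. xs \<in> std_simps vert0P 1 2 \<and> distinct xs \<and> xs \<in> UNIV \<and> set xs \<subseteq> set G \<longrightarrow>
        fac X G y 2 xs \<in> thin X" using nd0 by fastforce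
    show "\<forall>xs\<in>std_simps fullP 1 1. distinct xs \<and> xs \<in> UNIV \<longrightarrow> fc Y 1 1 xs c \<in> marked Y"
      using fc_in[OF sY c] by (auto simp: mY std_simps_vl)
    show "\<forall>xs\<in>std_simps fullP 1 2. distinct xs \<and> xs \<in> UNIV \<longrightarrow> fc Y 2 1 xs c \<in> lean Y"
      using nd by fastforce
    show "\<forall>xs\<in>std_simps fullP 1 2. distinct xs \<and> xs \<in> UNIV \<longrightarrow> fc Y 2 1 xs c \<in> thin Y"
      using nd by fastforce
  qed
  then obtain \<omega> where w: "\<omega> \<in> simp X 1" "p 1 \<omega> = c" "fc X 0 1 [0] \<omega> = x0"
    "\<forall>xs\<in>std_simps fullP 1 1. distinct xs \<and> xs \<in> UNIV \<longrightarrow> fc X 1 1 xs \<omega> \<in> marked X"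
    by auto
  have "[0,1] \<in> std_simps fullP 1 1" by (simp add: std_simps_def fullP_def)
  then have "\<omega> \<in> marked X" using w(4) fc_id1[OF sX w(1)] by auto
  then show ?thesis using w by auto
qed


lemma idx_Nil: "idx [] v = 0" by (simp add: idx_def)
lemma idx_Cons: "idx (a # G) v = (if a < v then idx G v + 1 else idx G v)" by (simp add: idx_def)

lemma hornP_I: "j \<le> n \<Longrightarrow> j \<noteq> i \<Longrightarrow> j \<notin> F \<Longrightarrow> hornP n i F"
  unfolding hornP_def by auto

lemma A3tri:
  assumes fib: "mb_fibration X Y p" and mY: "marked Y = simp Y 1" and lY: "lean Y = simp Y 2"
  and e: "e \<in> simp X 1" "e \<in> marked X" and k: "k \<in> simp X 1" and ek: "fc X 0 1 [0] e = fc X 0 1 [0] k"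
  and c: "c \<in> simp Y 1" and pe: "p 1 e = c" and pk: "p 1 k = c"
  shows "\<exists>\<zeta>\<in>simp X 2. \<zeta> \<in> thin X \<and> fc X 1 2 [0,1] \<zeta> = e \<and> fc X 1 2 [0,2] \<zeta> = k \<and> p 2 \<zeta> = fc Y 2 1 [0,1,1] c"
proof -
  have X: "is_mbset X" and Y: "is_mbset Y" and p: "is_smap X Y p"
    using fib_X[OF fib] fib_Y[OF fib] fib_p[OF fib] .
  have sX: "is_sset X" and sY: "is_sset Y" using mbset_sset X Y by auto
  define \<beta> where "\<beta> = fc Y 2 1 [0,1,1] c"
  have b: "\<beta> \<in> simp Y 2" unfolding \<beta>_def by (rule fc_in[OF sY c]) (simp add: vl_def)
  have bd: "\<beta> \<in> thin Y" unfolding \<beta>_def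
    by (rule mbset_deg2[OF Y fc_in[OF sY c] fc_degenerate[OF sY c]]) (simp_all add: vl_def)
  have wf: "wfF X 2 (hornP 2 0) [([0,1], e), ([0,2], k)]" unfolding wfF_def using e k by (auto simp: hornP_def atMost2)
  have cm: "cmpt X 2 [([0,1], e), ([0,2], k)]"
    using ek by (intro cmpt_common[OF sX wf]) (simp add: fac_def idx_def One_nat_def)
  have "\<exists>\<omega>\<in>simp X 2. p 2 \<omega> = \<beta> \<and> (\<forall>(G,y)\<in>set [([0,1], e), ([0,2], k)]. fc X (dimF G) 2 G \<omega> = y)
     \<and> (\<forall>xs\<in>std_simps fullP 2 1. distinct xs \<and> xs \<in> {[0,1]} \<longrightarrow> fc X 1 2 xs \<omega> \<in> marked X)
     \<and> (\<forall>xs\<in>std_simps fullP 2 2. distinct xs \<and> xs \<in> {[0,1,2]} \<longrightarrow> fc X 2 2 xs \<omega> \<in> lean X)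
     \<and> (\<forall>xs\<in>std_simps fullP 2 2. distinct xs \<and> xs \<in> {[0,1,2]} \<longrightarrow> fc X 2 2 xs \<omega> \<in> thin X)"
  proof (rule fill[OF fib_A3[OF fib order_refl] X Y p b wf _ cm])
    show "\<forall>(G, y)\<in>set [([0, 1], e), ([0, 2], k)]. p (dimF G) y = fc Y (dimF G) 2 G \<beta>"
      using pe pk fc_id1[OF sY c] c unfolding \<beta>_def by (simp add: fc_fc[OF sY] vl_def)
    show "\<forall>m xs. xs \<in> std_simps (hornP 2 0) 2 m \<longrightarrow> (\<exists>(G, y)\<in>set [([0, 1], e), ([0, 2], k)]. set xs \<subseteq> set G)"
      by (auto simp: std_simps_def hornP_def atMost2)
    show "\<forall>(G, y)\<in>set [([0, 1], e), ([0, 2], k)]. \<forall>xs. xs \<in> std_simps (hornP 2 0) 2 1 \<and> distinct xs \<and> xs \<in> {[0, 1]} \<and> set xs \<subseteq> set G \<longrightarrow>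
        fac X G y 1 xs \<in> marked X"
      using e fc_id1[OF sX e(1)] by (auto simp: fac_def idx_def)
    show "\<forall>(G, y)\<in>set [([0, 1], e), ([0, 2], k)]. \<forall>xs. xs \<in> std_simps (hornP 2 0) 2 2 \<and> distinct xs \<and> xs \<in> {[0, 1, 2]} \<and> set xs \<subseteq> set G \<longrightarrow>
        fac X G y 2 xs \<in> lean X"
      by (auto simp: std_simps_def hornP_def atMost2)
    show "\<forall>(G, y)\<in>set [([0, 1], e), ([0, 2], k)]. \<forall>xs. xs \<in> std_simps (hornP 2 0) 2 2 \<and> distinct xs \<and> xs \<in> {[0, 1, 2]} \<and> set xs \<subseteq> set G \<longrightarrow>
        fac X G y 2 xs \<in> thin X"
      by (auto simp: std_simps_def hornP_def atMost2)
    show "\<forall>xs\<in>std_simps fullP 2 1. distinct xs \<and> xs \<in> {[0, 1]} \<longrightarrow> fc Y 1 2 xs \<beta> \<in> marked Y"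
      using fc_in[OF sY b] by (auto simp: mY std_simps_vl)
    show "\<forall>xs\<in>std_simps fullP 2 2. distinct xs \<and> xs \<in> {[0, 1, 2]} \<longrightarrow> fc Y 2 2 xs \<beta> \<in> lean Y"
      using fc_in[OF sY b] by (auto simp: lY std_simps_vl)
    show "\<forall>xs\<in>std_simps fullP 2 2. distinct xs \<and> xs \<in> {[0, 1, 2]} \<longrightarrow> fc Y 2 2 xs \<beta> \<in> thin Y"
      using bd fc_id2[OF sY b] by auto
  qed
  then obtain \<omega> where w: "\<omega> \<in> simp X 2" "p 2 \<omega> = \<beta>" "fc X 1 2 [0,1] \<omega> = e" "fc X 1 2 [0,2] \<omega> = k"
    "\<forall>xs\<in>std_simps fullP 2 2. distinct xs \<and> xs \<in> {[0,1,2]} \<longrightarrow> fc X 2 2 xs \<omega> \<in> thin X"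
    by auto
  have "[0,1,2] \<in> std_simps fullP 2 2" by (simp add: std_simps_def fullP_def)
  then have "\<omega> \<in> thin X" using w(5) fc_id2[OF sX w(1)] by auto
  then show ?thesis using w unfolding \<beta>_def by auto
qed

lemma A3tet:
  assumes fib: "mb_fibration X Y p" and mY: "marked Y = simp Y 1" and lY: "lean Y = simp Y 2"
  and b: "\<beta> \<in> simp Y 3" and bt: "fc Y 2 3 [0,1,3] \<beta> \<in> thin Y"
  and a: "a \<in> simp X 2" and bb: "b \<in> simp X 2" and r: "r \<in> simp X 2"
  and pa: "p 2 a = fc Y 2 3 [0,2,3] \<beta>" and pb: "p 2 b = fc Y 2 3 [0,1,3] \<beta>" and pr: "p 2 r = fc Y 2 3 [0,1,2] \<beta>"
  and bth: "b \<in> thin X" and em: "fc X 1 2 [0,1] b \<in> marked X"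
  and c1: "fc X 1 2 [0,1] r = fc X 1 2 [0,1] b" and c2: "fc X 1 2 [0,1] a = fc X 1 2 [0,2] r"
  and c3: "fc X 1 2 [0,2] a = fc X 1 2 [0,2] b"
  shows "\<exists>\<omega>\<in>simp X 3. p 3 \<omega> = \<beta> \<and> fc X 2 3 [0,2,3] \<omega> = a \<and> fc X 2 3 [0,1,3] \<omega> = b \<and> fc X 2 3 [0,1,2] \<omega> = r"
proof -
  have X: "is_mbset X" and Y: "is_mbset Y" and p: "is_smap X Y p"
    using fib_X[OF fib] fib_Y[OF fib] fib_p[OF fib] .
  have sX: "is_sset X" and sY: "is_sset Y" using mbset_sset X Y by auto
  have rl: "rlp (mkstd (hornP 3 0) 3 {[0,1]} {[0,1,3]} {[0,1,3]}) (mkstd fullP 3 {[0,1]} {[0,1,3]} {[0,1,3]}) X Y p"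
    using fib_A3[OF fib, of 3] by simp
  have wf: "wfF X 3 (hornP 3 0) [([0,2,3], a), ([0,1,3], b), ([0,1,2], r)]"
    unfolding wfF_def using a bb r by (auto simp: hornP_def atMost3)
  have cm: "cmpt X 3 [([0,2,3], a), ([0,1,3], b), ([0,1,2], r)]"
    using c1 c2 c3 by (intro cmpt_common[OF sX wf]) (simp add: fac_def idx_Nil idx_Cons sucs)
  have "\<exists>\<omega>\<in>simp X 3. p 3 \<omega> = \<beta> \<and> (\<forall>(G,y)\<in>set [([0,2,3], a), ([0,1,3], b), ([0,1,2], r)]. fc X (dimF G) 3 G \<omega> = y)
     \<and> (\<forall>xs\<in>std_simps fullP 3 1. distinct xs \<and> xs \<in> {[0,1]} \<longrightarrow> fc X 1 3 xs \<omega> \<in> marked X)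
     \<and> (\<forall>xs\<in>std_simps fullP 3 2. distinct xs \<and> xs \<in> {[0,1,3]} \<longrightarrow> fc X 2 3 xs \<omega> \<in> lean X)
     \<and> (\<forall>xs\<in>std_simps fullP 3 2. distinct xs \<and> xs \<in> {[0,1,3]} \<longrightarrow> fc X 2 3 xs \<omega> \<in> thin X)"
  proof (rule fill[OF rl X Y p b wf _ cm])
    show "\<forall>(G, y)\<in>set [([0,2,3], a), ([0,1,3], b), ([0,1,2], r)]. p (dimF G) y = fc Y (dimF G) 3 G \<beta>"
      using pa pb pr by simp
    show "\<forall>m xs. xs \<in> std_simps (hornP 3 0) 3 m \<longrightarrow> (\<exists>(G, y)\<in>set [([0,2,3], a), ([0,1,3], b), ([0,1,2], r)]. set xs \<subseteq> set G)"
      by (auto simp: std_simps_def hornP_def atMost3)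
    show "\<forall>(G, y)\<in>set [([0,2,3], a), ([0,1,3], b), ([0,1,2], r)]. \<forall>xs. xs \<in> std_simps (hornP 3 0) 3 1 \<and> distinct xs \<and> xs \<in> {[0, 1]} \<and> set xs \<subseteq> set G \<longrightarrow>
        fac X G y 1 xs \<in> marked X"
      using em c1 by (auto simp: fac_def idx_Nil idx_Cons sucs)
    show "\<forall>(G, y)\<in>set [([0,2,3], a), ([0,1,3], b), ([0,1,2], r)]. \<forall>xs. xs \<in> std_simps (hornP 3 0) 3 2 \<and> distinct xs \<and> xs \<in> {[0, 1, 3]} \<and> set xs \<subseteq> set G \<longrightarrow>
        fac X G y 2 xs \<in> lean X"
      using mbset_thin_lean[OF X bth] fc_id2[OF sX bb] by (auto simp: fac_def idx_Nil idx_Cons sucs)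
    show "\<forall>(G, y)\<in>set [([0,2,3], a), ([0,1,3], b), ([0,1,2], r)]. \<forall>xs. xs \<in> std_simps (hornP 3 0) 3 2 \<and> distinct xs \<and> xs \<in> {[0, 1, 3]} \<and> set xs \<subseteq> set G \<longrightarrow>
        fac X G y 2 xs \<in> thin X"
      using bth fc_id2[OF sX bb] by (auto simp: fac_def idx_Nil idx_Cons sucs)
    show "\<forall>xs\<in>std_simps fullP 3 1. distinct xs \<and> xs \<in> {[0, 1]} \<longrightarrow> fc Y 1 3 xs \<beta> \<in> marked Y"
      using fc_in[OF sY b] by (auto simp: mY std_simps_vl)
    show "\<forall>xs\<in>std_simps fullP 3 2. distinct xs \<and> xs \<in> {[0, 1, 3]} \<longrightarrow> fc Y 2 3 xs \<beta> \<in> lean Y"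
      using fc_in[OF sY b] by (auto simp: lY std_simps_vl)
    show "\<forall>xs\<in>std_simps fullP 3 2. distinct xs \<and> xs \<in> {[0, 1, 3]} \<longrightarrow> fc Y 2 3 xs \<beta> \<in> thin Y"
      using bt by auto
  qed
  then show ?thesis by auto
qed

lemma inner3:
  assumes fib: "mb_fibration X Y p" and mY: "marked Y = simp Y 1" and lY: "lean Y = simp Y 2"
  and b: "\<beta> \<in> simp Y 3"
  and a: "a \<in> simp X 2" and bb: "b \<in> simp X 2" and r: "r \<in> simp X 2"
  and pa: "p 2 a = fc Y 2 3 [1,2,3] \<beta>" and pb: "p 2 b = fc Y 2 3 [0,1,3] \<beta>" and pr: "p 2 r = fc Y 2 3 [0,1,2] \<beta>"
  and rl: "r \<in> lean X"
  and c1: "fc X 1 2 [0,2] a = fc X 1 2 [1,2] b" and c2: "fc X 1 2 [0,1] a = fc X 1 2 [1,2] r"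
  and c3: "fc X 1 2 [0,1] b = fc X 1 2 [0,1] r"
  shows "\<exists>\<omega>\<in>simp X 3. p 3 \<omega> = \<beta> \<and> fc X 2 3 [1,2,3] \<omega> = a \<and> fc X 2 3 [0,1,3] \<omega> = b \<and> fc X 2 3 [0,1,2] \<omega> = r"
proof -
  have X: "is_mbset X" and Y: "is_mbset Y" and p: "is_smap X Y p"
    using fib_X[OF fib] fib_Y[OF fib] fib_p[OF fib] .
  have sX: "is_sset X" and sY: "is_sset Y" using mbset_sset X Y by auto
  have r0: "rlp (mkstd (hornP 3 1) 3 {} {[1 - 1, 1, 1 + 1]} {}) (mkstd fullP 3 {} {[1 - 1, 1, 1 + 1]} {}) X Y p"
    by (rule fib_A1[OF fib]) simp_all
  have e: "[1 - 1, 1, 1 + 1] = [0,1,2::nat]" by simp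
  have rlp: "rlp (mkstd (hornP 3 1) 3 {} {[0,1,2]} {}) (mkstd fullP 3 {} {[0,1,2]} {}) X Y p"
    using r0 unfolding e .
  have wf: "wfF X 3 (hornP 3 1) [([1,2,3], a), ([0,1,3], b), ([0,1,2], r)]"
  proof -
    have h1: "hornP 3 1 {1,2,3}" by (rule hornP_I[of 0]) simp_all
    have h2: "hornP 3 1 {0,1,3}" by (rule hornP_I[of 2]) simp_all
    have h3: "hornP 3 1 {0,1,2}" by (rule hornP_I[of 3]) simp_all
    note h = h1 h2 h3
    show ?thesis unfolding wfF_def using a bb r h by simp
  qed
  have cm: "cmpt X 3 [([1,2,3], a), ([0,1,3], b), ([0,1,2], r)]"
    using c1 c2 c3 by (intro cmpt_common[OF sX wf]) (simp add: fac_def idx_Nil idx_Cons sucs)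
  have "\<exists>\<omega>\<in>simp X 3. p 3 \<omega> = \<beta> \<and> (\<forall>(G,y)\<in>set [([1,2,3], a), ([0,1,3], b), ([0,1,2], r)]. fc X (dimF G) 3 G \<omega> = y)
     \<and> (\<forall>xs\<in>std_simps fullP 3 1. distinct xs \<and> xs \<in> {} \<longrightarrow> fc X 1 3 xs \<omega> \<in> marked X)
     \<and> (\<forall>xs\<in>std_simps fullP 3 2. distinct xs \<and> xs \<in> {[0,1,2]} \<longrightarrow> fc X 2 3 xs \<omega> \<in> lean X)
     \<and> (\<forall>xs\<in>std_simps fullP 3 2. distinct xs \<and> xs \<in> {} \<longrightarrow> fc X 2 3 xs \<omega> \<in> thin X)"
  proof (rule fill[OF rlp X Y p b wf _ cm])
    show "\<forall>(G, y)\<in>set [([1,2,3], a), ([0,1,3], b), ([0,1,2], r)]. p (dimF G) y = fc Y (dimF G) 3 G \<beta>"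
      using pa pb pr by simp
    show "\<forall>m xs. xs \<in> std_simps (hornP 3 1) 3 m \<longrightarrow> (\<exists>(G, y)\<in>set [([1,2,3], a), ([0,1,3], b), ([0,1,2], r)]. set xs \<subseteq> set G)"
      by (auto simp: std_simps_def hornP_def atMost3)
    show "\<forall>(G, y)\<in>set [([1,2,3], a), ([0,1,3], b), ([0,1,2], r)]. \<forall>xs. xs \<in> std_simps (hornP 3 1) 3 2 \<and> distinct xs \<and> xs \<in> {[0, 1, 2]} \<and> set xs \<subseteq> set G \<longrightarrow>
        fac X G y 2 xs \<in> lean X"
      using rl fc_id2[OF sX r] by (auto simp: fac_def idx_Nil idx_Cons sucs)
    show "\<forall>xs\<in>std_simps fullP 3 2. distinct xs \<and> xs \<in> {[0, 1, 2]} \<longrightarrow> fc Y 2 3 xs \<beta> \<in> lean Y"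
      using fc_in[OF sY b] by (auto simp: lY std_simps_vl)
  qed auto
  then show ?thesis by auto
qed

lemma inner2:
  assumes fib: "mb_fibration X Y p" and mY: "marked Y = simp Y 1" and lY: "lean Y = simp Y 2"
  and b: "\<beta> \<in> simp Y 2"
  and f: "f \<in> simp X 1" and g: "g \<in> simp X 1"
  and pf: "p 1 f = fc Y 1 2 [0,1] \<beta>" and pg: "p 1 g = fc Y 1 2 [1,2] \<beta>"
  and c1: "fc X 0 1 [1] f = fc X 0 1 [0] g"
  shows "\<exists>\<rho>\<in>simp X 2. \<rho> \<in> lean X \<and> p 2 \<rho> = \<beta> \<and> fc X 1 2 [0,1] \<rho> = f \<and> fc X 1 2 [1,2] \<rho> = g"
proof -
  have X: "is_mbset X" and Y: "is_mbset Y" and p: "is_smap X Y p"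
    using fib_X[OF fib] fib_Y[OF fib] fib_p[OF fib] .
  have sX: "is_sset X" and sY: "is_sset Y" using mbset_sset X Y by auto
  have r0: "rlp (mkstd (hornP 2 1) 2 {} {[1 - 1, 1, 1 + 1]} {}) (mkstd fullP 2 {} {[1 - 1, 1, 1 + 1]} {}) X Y p"
    by (rule fib_A1[OF fib]) simp_all
  have e: "[1 - 1, 1, 1 + 1] = [0,1,2::nat]" by simp
  have rlp: "rlp (mkstd (hornP 2 1) 2 {} {[0,1,2]} {}) (mkstd fullP 2 {} {[0,1,2]} {}) X Y p"
    using r0 unfolding e .
  have wf: "wfF X 2 (hornP 2 1) [([0,1], f), ([1,2], g)]"
  proof -
    have h1: "hornP 2 1 {0,1}" by (rule hornP_I[of 2]) simp_all
    have h2: "hornP 2 1 {1,2}" by (rule hornP_I[of 0]) simp_all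
    show ?thesis unfolding wfF_def using f g h1 h2 by simp
  qed
  have cm: "cmpt X 2 [([0,1], f), ([1,2], g)]"
    using c1 by (intro cmpt_common[OF sX wf]) (simp add: fac_def idx_Nil idx_Cons sucs)
  have "\<exists>\<omega>\<in>simp X 2. p 2 \<omega> = \<beta> \<and> (\<forall>(G,y)\<in>set [([0,1], f), ([1,2], g)]. fc X (dimF G) 2 G \<omega> = y)
     \<and> (\<forall>xs\<in>std_simps fullP 2 1. distinct xs \<and> xs \<in> {} \<longrightarrow> fc X 1 2 xs \<omega> \<in> marked X)
     \<and> (\<forall>xs\<in>std_simps fullP 2 2. distinct xs \<and> xs \<in> {[0,1,2]} \<longrightarrow> fc X 2 2 xs \<omega> \<in> lean X)
     \<and> (\<forall>xs\<in>std_simps fullP 2 2. distinct xs \<and> xs \<in> {} \<longrightarrow> fc X 2 2 xs \<omega> \<in> thin X)"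
  proof (rule fill[OF rlp X Y p b wf _ cm])
    show "\<forall>(G, y)\<in>set [([0,1], f), ([1,2], g)]. p (dimF G) y = fc Y (dimF G) 2 G \<beta>"
      using pf pg by simp
    show "\<forall>m xs. xs \<in> std_simps (hornP 2 1) 2 m \<longrightarrow> (\<exists>(G, y)\<in>set [([0,1], f), ([1,2], g)]. set xs \<subseteq> set G)"
      by (auto simp: std_simps_def hornP_def atMost2)
    show "\<forall>(G, y)\<in>set [([0,1], f), ([1,2], g)]. \<forall>xs. xs \<in> std_simps (hornP 2 1) 2 2 \<and> distinct xs \<and> xs \<in> {[0, 1, 2]} \<and> set xs \<subseteq> set G \<longrightarrow>
        fac X G y 2 xs \<in> lean X"
      by (auto simp: std_simps_def hornP_def atMost2)
    show "\<forall>xs\<in>std_simps fullP 2 2. distinct xs \<and> xs \<in> {[0, 1, 2]} \<longrightarrow> fc Y 2 2 xs \<beta> \<in> lean Y"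
      using fc_in[OF sY b] by (auto simp: lY std_simps_vl)
  qed auto
  then obtain \<omega> where w: "\<omega> \<in> simp X 2" "p 2 \<omega> = \<beta>" "fc X 1 2 [0,1] \<omega> = f" "fc X 1 2 [1,2] \<omega> = g"
    "\<forall>xs\<in>std_simps fullP 2 2. distinct xs \<and> xs \<in> {[0,1,2]} \<longrightarrow> fc X 2 2 xs \<omega> \<in> lean X"
    by auto
  have "[0,1,2] \<in> std_simps fullP 2 2" by (simp add: std_simps_def fullP_def)
  then have "\<omega> \<in> lean X" using w(5) fc_id2[OF sX w(1)] by auto
  then show ?thesis using w by auto
qed


lemma stepB:
  assumes fib: "mb_fibration X Y p" and mY: "marked Y = simp Y 1" and lY: "lean Y = simp Y 2"
  and H: "\<forall>s\<in>simp Y 0. \<forall>x\<in>simp X 2. p 2 x = fc Y 2 0 [0,0,0] s \<longrightarrow> x \<in> thin X"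
  and d: "\<delta> \<in> simp X 2" and c: "c \<in> simp Y 1" and pd: "p 2 \<delta> = fc Y 2 1 [0,1,1] c"
  shows "\<delta> \<in> lean X"
proof -
  have X: "is_mbset X" and Y: "is_mbset Y" and p: "is_smap X Y p"
    using fib_X[OF fib] fib_Y[OF fib] fib_p[OF fib] .
  have sX: "is_sset X" and sY: "is_sset Y" using mbset_sset X Y by auto
  define h1 where "h1 = fc X 1 2 [0,1] \<delta>"
  define h2 where "h2 = fc X 1 2 [0,2] \<delta>"
  define x0 where "x0 = fc X 0 2 [0] \<delta>"
  have h1: "h1 \<in> simp X 1" unfolding h1_def by (rule fc_in[OF sX d]) (simp add: vl_def)
  have h2: "h2 \<in> simp X 1" unfolding h2_def by (rule fc_in[OF sX d]) (simp add: vl_def)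
  have x0: "x0 \<in> simp X 0" unfolding x0_def by (rule fc_in[OF sX d]) (simp add: vl_def)
  have ph1: "p 1 h1 = c" unfolding h1_def
    using pd c fc_id1[OF sY c] by (simp add: smap_fc[OF p d] fc_fc[OF sY] vl_def)
  have ph2: "p 1 h2 = c" unfolding h2_def
    using pd c fc_id1[OF sY c] by (simp add: smap_fc[OF p d] fc_fc[OF sY] vl_def)
  have px0: "p 0 x0 = fc Y 0 1 [0] c" unfolding x0_def
    using pd c by (simp add: smap_fc[OF p d] fc_fc[OF sY] vl_def)
  obtain e where e: "e \<in> simp X 1" "e \<in> marked X" "p 1 e = c" "fc X 0 1 [0] e = x0"
    using A4lift[OF fib mY lY x0 c px0] by blast
  have e1: "fc X 0 1 [0] e = fc X 0 1 [0] h1" unfolding e(4) x0_def h1_def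
    using d by (simp add: fc_fc[OF sX] vl_def)
  have e2: "fc X 0 1 [0] e = fc X 0 1 [0] h2" unfolding e(4) x0_def h2_def
    using d by (simp add: fc_fc[OF sX] vl_def)
  obtain z1 where z1: "z1 \<in> simp X 2" "z1 \<in> thin X" "fc X 1 2 [0,1] z1 = e" "fc X 1 2 [0,2] z1 = h1"
     "p 2 z1 = fc Y 2 1 [0,1,1] c"
    using A3tri[OF fib mY lY e(1,2) h1 e1 c e(3) ph1] by blast
  obtain z2 where z2: "z2 \<in> simp X 2" "z2 \<in> thin X" "fc X 1 2 [0,1] z2 = e" "fc X 1 2 [0,2] z2 = h2"
     "p 2 z2 = fc Y 2 1 [0,1,1] c"
    using A3tri[OF fib mY lY e(1,2) h2 e2 c e(3) ph2] by blast
  define \<beta> where "\<beta> = fc Y 3 1 [0,1,1,1] c"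
  have b: "\<beta> \<in> simp Y 3" unfolding \<beta>_def by (rule fc_in[OF sY c]) (simp add: vl_def)
  have bf: "\<And>F. vl F 2 3 \<Longrightarrow> fc Y 2 3 F \<beta> = fc Y 2 1 (map ((!) [0,1,1,1]) F) c"
    unfolding \<beta>_def by (rule fc_fc[OF sY c]) (simp add: vl_def)
  have bt: "fc Y 2 3 [0,1,3] \<beta> \<in> thin Y"
    using bf[of "[0,1,3]"] mbset_deg2[OF Y fc_in[OF sY c] fc_degenerate[OF sY c], of "[0,1,1]"]
    by (simp add: vl_def)
  obtain \<omega> where w: "\<omega> \<in> simp X 3" "p 3 \<omega> = \<beta>" "fc X 2 3 [0,2,3] \<omega> = \<delta>" "fc X 2 3 [0,1,3] \<omega> = z2"
    "fc X 2 3 [0,1,2] \<omega> = z1"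
  proof -
    have "\<exists>\<omega>\<in>simp X 3. p 3 \<omega> = \<beta> \<and> fc X 2 3 [0,2,3] \<omega> = \<delta> \<and> fc X 2 3 [0,1,3] \<omega> = z2 \<and> fc X 2 3 [0,1,2] \<omega> = z1"
    proof (rule A3tet[OF fib mY lY b bt d z2(1) z1(1)])
      show "p 2 \<delta> = fc Y 2 3 [0, 2, 3] \<beta>" using pd bf[of "[0,2,3]"] by (simp add: vl_def)
      show "p 2 z2 = fc Y 2 3 [0, 1, 3] \<beta>" using z2 bf[of "[0,1,3]"] by (simp add: vl_def)
      show "p 2 z1 = fc Y 2 3 [0, 1, 2] \<beta>" using z1 bf[of "[0,1,2]"] by (simp add: vl_def)
      show "z2 \<in> thin X" by (rule z2(2))
      show "fc X 1 2 [0, 1] z2 \<in> marked X" using z2(3) e(2) by simp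
      show "fc X 1 2 [0, 1] z1 = fc X 1 2 [0, 1] z2" using z1(3) z2(3) by simp
      show "fc X 1 2 [0, 1] \<delta> = fc X 1 2 [0, 2] z1" using z1(4) h1_def by simp
      show "fc X 1 2 [0, 2] \<delta> = fc X 1 2 [0, 2] z2" using z2(4) h2_def by simp
    qed
    then show ?thesis using that by blast
  qed
  define \<mu> where "\<mu> = fc X 2 3 [1,2,3] \<omega>"
  have mu: "\<mu> \<in> simp X 2" unfolding \<mu>_def by (rule fc_in[OF sX w(1)]) (simp add: vl_def)
  define s2 where "s2 = fc Y 0 1 [1] c"
  have s2: "s2 \<in> simp Y 0" unfolding s2_def by (rule fc_in[OF sY c]) (simp add: vl_def)
  have pmu: "p 2 \<mu> = fc Y 2 0 [0,0,0] s2"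
  proof -
    have "p 2 \<mu> = fc Y 2 3 [1,2,3] \<beta>" unfolding \<mu>_def using smap_fc[OF p w(1), of "[1,2,3]" 2] w(2)
      by (simp add: vl_def)
    also have "\<dots> = fc Y 2 1 [1,1,1] c" using bf[of "[1,2,3]"] by (simp add: vl_def)
    also have "\<dots> = fc Y 2 0 [0,0,0] s2" unfolding s2_def using c by (simp add: fc_fc[OF sY] vl_def)
    finally show ?thesis .
  qed
  have "\<mu> \<in> thin X" using H s2 mu pmu by blast
  then have "fc X 2 3 [1,2,3] \<omega> \<in> lean X" unfolding \<mu>_def by (rule mbset_thin_lean[OF X])
  moreover have "fc X 2 3 [0,1,2] \<omega> \<in> lean X" using w(5) mbset_thin_lean[OF X z1(2)] by simp
  moreover have "fc X 2 3 [0,1,3] \<omega> \<in> lean X" using w(4) mbset_thin_lean[OF X z2(2)] by simp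
  ultimately have "fc X 2 3 [0,2,3] \<omega> \<in> lean X" using R1[OF fib lY w(1)] by blast
  then show ?thesis using w(3) by simp
qed


lemma stepA:
  assumes fib: "mb_fibration X Y p" and mY: "marked Y = simp Y 1" and lY: "lean Y = simp Y 2"
  and H: "\<forall>s\<in>simp Y 0. \<forall>x\<in>simp X 2. p 2 x = fc Y 2 0 [0,0,0] s \<longrightarrow> x \<in> thin X"
  and s: "\<sigma> \<in> simp X 2"
  shows "\<sigma> \<in> lean X"
proof -
  have X: "is_mbset X" and Y: "is_mbset Y" and p: "is_smap X Y p"
    using fib_X[OF fib] fib_Y[OF fib] fib_p[OF fib] .
  have sX: "is_sset X" and sY: "is_sset Y" using mbset_sset X Y by auto
  define \<beta> where "\<beta> = p 2 \<sigma>"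
  have b: "\<beta> \<in> simp Y 2" unfolding \<beta>_def by (rule smap_in[OF p s])
  define f where "f = fc X 1 2 [0,1] \<sigma>"
  define g where "g = fc X 1 2 [1,2] \<sigma>"
  have f: "f \<in> simp X 1" unfolding f_def by (rule fc_in[OF sX s]) (simp add: vl_def)
  have g: "g \<in> simp X 1" unfolding g_def by (rule fc_in[OF sX s]) (simp add: vl_def)
  have pf: "p 1 f = fc Y 1 2 [0,1] \<beta>" unfolding f_def \<beta>_def by (rule smap_fc[OF p s]) (simp add: vl_def)
  have pg: "p 1 g = fc Y 1 2 [1,2] \<beta>" unfolding g_def \<beta>_def by (rule smap_fc[OF p s]) (simp add: vl_def)
  have fg: "fc X 0 1 [1] f = fc X 0 1 [0] g" unfolding f_def g_def using s by (simp add: fc_fc[OF sX] vl_def)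
  obtain \<rho> where r: "\<rho> \<in> simp X 2" "\<rho> \<in> lean X" "p 2 \<rho> = \<beta>" "fc X 1 2 [0,1] \<rho> = f" "fc X 1 2 [1,2] \<rho> = g"
    using inner2[OF fib mY lY b f g pf pg fg] by blast
  define a where "a = fc X 2 1 [0,1,1] g"
  have a: "a \<in> simp X 2" unfolding a_def by (rule fc_in[OF sX g]) (simp add: vl_def)
  have al: "a \<in> lean X" unfolding a_def by (rule lean_deg[OF X g]) (simp_all add: vl_def)
  define \<beta>1 where "\<beta>1 = fc Y 3 2 [0,1,2,2] \<beta>"
  have b1: "\<beta>1 \<in> simp Y 3" unfolding \<beta>1_def by (rule fc_in[OF sY b]) (simp add: vl_def)
  have bf: "\<And>F. vl F 2 3 \<Longrightarrow> fc Y 2 3 F \<beta>1 = fc Y 2 2 (map ((!) [0,1,2,2]) F) \<beta>"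
    unfolding \<beta>1_def by (rule fc_fc[OF sY b]) (simp add: vl_def)
  obtain \<omega> where w: "\<omega> \<in> simp X 3" "p 3 \<omega> = \<beta>1" "fc X 2 3 [1,2,3] \<omega> = a" "fc X 2 3 [0,1,3] \<omega> = \<sigma>"
    "fc X 2 3 [0,1,2] \<omega> = \<rho>"
  proof -
    have "\<exists>\<omega>\<in>simp X 3. p 3 \<omega> = \<beta>1 \<and> fc X 2 3 [1,2,3] \<omega> = a \<and> fc X 2 3 [0,1,3] \<omega> = \<sigma> \<and> fc X 2 3 [0,1,2] \<omega> = \<rho>"
    proof (rule inner3[OF fib mY lY b1 a s r(1)])
      show "p 2 a = fc Y 2 3 [1, 2, 3] \<beta>1"
        unfolding a_def using bf[of "[1,2,3]"] smap_fc[OF p g, of "[0,1,1]" 2] pg b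
        by (simp add: vl_def fc_fc[OF sY])
      show "p 2 \<sigma> = fc Y 2 3 [0, 1, 3] \<beta>1" using bf[of "[0,1,3]"] fc_id2[OF sY b] unfolding \<beta>_def
        by (simp add: vl_def)
      show "p 2 \<rho> = fc Y 2 3 [0, 1, 2] \<beta>1" using bf[of "[0,1,2]"] fc_id2[OF sY b] r(3)
        by (simp add: vl_def)
      show "\<rho> \<in> lean X" by (rule r(2))
      show "fc X 1 2 [0, 2] a = fc X 1 2 [1, 2] \<sigma>" unfolding a_def
        using g fc_id1[OF sX g] unfolding g_def by (simp add: fc_fc[OF sX] vl_def)
      show "fc X 1 2 [0, 1] a = fc X 1 2 [1, 2] \<rho>" unfolding a_def
        using g fc_id1[OF sX g] r(5) by (simp add: fc_fc[OF sX] vl_def)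
      show "fc X 1 2 [0, 1] \<sigma> = fc X 1 2 [0, 1] \<rho>" using r(4) unfolding f_def by simp
    qed
    then show ?thesis using that by blast
  qed
  define \<delta> where "\<delta> = fc X 2 3 [0,2,3] \<omega>"
  have d: "\<delta> \<in> simp X 2" unfolding \<delta>_def by (rule fc_in[OF sX w(1)]) (simp add: vl_def)
  define c where "c = fc Y 1 2 [0,2] \<beta>"
  have c: "c \<in> simp Y 1" unfolding c_def by (rule fc_in[OF sY b]) (simp add: vl_def)
  have pd: "p 2 \<delta> = fc Y 2 1 [0,1,1] c"
  proof -
    have "p 2 \<delta> = fc Y 2 3 [0,2,3] \<beta>1" unfolding \<delta>_def using smap_fc[OF p w(1), of "[0,2,3]" 2] w(2)
      by (simp add: vl_def)
    also have "\<dots> = fc Y 2 2 [0,2,2] \<beta>" using bf[of "[0,2,3]"] by (simp add: vl_def)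
    also have "\<dots> = fc Y 2 1 [0,1,1] c" unfolding c_def using b by (simp add: fc_fc[OF sY] vl_def)
    finally show ?thesis .
  qed
  have "\<delta> \<in> lean X" by (rule stepB[OF fib mY lY H d c pd])
  then have "fc X 2 3 [0,2,3] \<omega> \<in> lean X" unfolding \<delta>_def .
  moreover have "fc X 2 3 [0,1,2] \<omega> \<in> lean X" using w(5) r(2) by simp
  moreover have "fc X 2 3 [1,2,3] \<omega> \<in> lean X" using w(3) al by simp
  ultimately have "fc X 2 3 [0,1,3] \<omega> \<in> lean X" using R2[OF fib lY w(1)] by blast
  then show ?thesis using w(4) by simp
qed

theorem mainTheorem14:
  fixes S :: "'b sset" and TS :: "'b set" and X :: "'a mbset" and p :: "nat \<Rightarrow> 'a \<Rightarrow> 'b"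
  assumes "zero_one_fibration S TS X p"
  shows "(\<forall>s \<in> simp S 0. all_triangles_thin (fibre S X p s)) \<longleftrightarrow> all_triangles_lean X"
proof -
  define Y where "Y = sharp_scaled S TS"
  have fib: "mb_fibration X Y p" using assms unfolding zero_one_fibration_def Y_def by simp
  have sS: "is_sset S" using assms unfolding zero_one_fibration_def is_scaled_def by simp
  have Ys: "simp Y = simp S" "act Y = act S" "marked Y = simp Y 1" "lean Y = simp Y 2" "thin Y = TS"
    unfolding Y_def sharp_scaled_def by simp_all
  have X: "is_mbset X" and Y: "is_mbset Y" using fib_X[OF fib] fib_Y[OF fib] .
  have sY: "is_sset Y" by (rule mbset_sset[OF Y])
  have pt: "\<And>s. s \<in> simp S 0 \<Longrightarrow> act S (\<lambda>_. 0) 2 0 s = fc Y 2 0 [0,0,0] s"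
  proof -
    fix s assume s: "s \<in> simp S 0"
    have "act S (\<lambda>_. 0) 2 0 s = act S (\<lambda>i. [0,0,0::nat] ! i) 2 0 s"
      by (rule sset_ext[OF sS _ s]) (auto simp: nth_Cons' le_Suc_eq)
    then show "act S (\<lambda>_. 0) 2 0 s = fc Y 2 0 [0,0,0] s" unfolding fc_def Ys(2) .
  qed
  have fsimp: "\<And>s. simp (fibre S X p s) 2 = {x \<in> simp X 2. p 2 x = act S (\<lambda>_. 0) 2 0 s}"
    by (simp add: fibre_def Let_def)
  have fthin: "\<And>s. thin (fibre S X p s) = thin X \<inter> {x \<in> simp X 2. p 2 x = act S (\<lambda>_. 0) 2 0 s}"
    by (simp add: fibre_def Let_def)
  show ?thesis
  proof
    assume A: "\<forall>s \<in> simp S 0. all_triangles_thin (fibre S X p s)"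
    have H: "\<forall>s\<in>simp Y 0. \<forall>x\<in>simp X 2. p 2 x = fc Y 2 0 [0,0,0] s \<longrightarrow> x \<in> thin X"
    proof (intro ballI impI)
      fix s x assume s: "s \<in> simp Y 0" and x: "x \<in> simp X 2" and px: "p 2 x = fc Y 2 0 [0,0,0] s"
      have s': "s \<in> simp S 0" using s Ys(1) by simp
      have "x \<in> simp (fibre S X p s) 2" unfolding fsimp using x px pt[OF s'] by simp
      then have "x \<in> thin (fibre S X p s)" using A s' unfolding all_triangles_thin_def by blast
      then show "x \<in> thin X" unfolding fthin by simp
    qed
    show "all_triangles_lean X" unfolding all_triangles_lean_def
      using stepA[OF fib Ys(3,4) H] by blast
  next
    assume B: "all_triangles_lean X"
    show "\<forall>s \<in> simp S 0. all_triangles_thin (fibre S X p s)"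
      unfolding all_triangles_thin_def
    proof (intro ballI subsetI)
      fix s x assume s: "s \<in> simp S 0" and x: "x \<in> simp (fibre S X p s) 2"
      have x2: "x \<in> simp X 2" and px: "p 2 x = fc Y 2 0 [0,0,0] s" using x pt[OF s] unfolding fsimp by auto
      have s': "s \<in> simp Y 0" using s Ys(1) by simp
      have xl: "x \<in> lean X" using B x2 unfolding all_triangles_lean_def by blast
      have "p 2 x \<in> thin Y" unfolding px
        by (rule mbset_deg2[OF Y fc_in[OF sY s'] fc_degenerate[OF sY s']]) (simp_all add: vl_def)
      then have "x \<in> thin X" by (rule S2thin[OF fib Ys(3,4) xl])
      then show "x \<in> thin (fibre S X p s)" unfolding fthin using x2 px pt[OF s] by simp
    qed
  qed
qed

end
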